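(* Let $k$ be a field, $\Delta$ a finite connected quiver without oriented cycles, $X$ a finite length $k\Delta$-module and $M$ an endo-finite $k\Delta$-module. If $\langle\operatorname{\bold{dim}}X,\operatorname{\bold{Dim}}M\rangle>0$, then $\operatorname{Hom}(X,M)\neq 0$.
   Context: Modules are representations $(M_i,M_\alpha)$ of $\Delta$ with vertex set $\Delta_0$, arrow set $\Delta_1$, arrows $\alpha\colon s(\alpha)\to t(\alpha)$. $E(M)=\operatorname{End}(M)^{\mathrm{op}}$; $M$ is endo-finite if it has finite length as an $E(M)$-module. $\operatorname{\bold{dim}}X\in\mathbb Z^{\Delta_0}$ has $i$-th entry $\dim_kX_i$, and $(\operatorname{\bold{Dim}}M)_i$ is the length of $M_i$ as an $E(M)$-module. The Euler form is $\langle x,y\rangle=\sum_{i\in\Delta_0}x_iy_i-\sum_{\alpha\in\Delta_1}x_{s(\alpha)}y_{t(\alpha)}$. *)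

theory Defs
  imports Complex_Main
begin

record ('a, 'b) quiver =
  verts :: "'a set"
  arrs  :: "'b set"
  src   :: "'b \<Rightarrow> 'a"
  tgt   :: "'b \<Rightarrow> 'a"

definition arrow_rel :: "('a, 'b) quiver \<Rightarrow> ('a \<times> 'a) set" where
  "arrow_rel Q = {(src Q \<alpha>, tgt Q \<alpha>) | \<alpha>. \<alpha> \<in> arrs Q}"

definition finite_quiver :: "('a, 'b) quiver \<Rightarrow> bool" where
  "finite_quiver Q \<longleftrightarrow> finite (verts Q) \<and> finite (arrs Q)
     \<and> (\<forall>\<alpha>\<in>arrs Q. src Q \<alpha> \<in> verts Q \<and> tgt Q \<alpha> \<in> verts Q)"

definition connected_quiver :: "('a, 'b) quiver \<Rightarrow> bool" where
  "connected_quiver Q \<longleftrightarrow> verts Q \<noteq> {} \<and>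
     (\<forall>i\<in>verts Q. \<forall>j\<in>verts Q. (i, j) \<in> (arrow_rel Q \<union> (arrow_rel Q)\<inverse>)\<^sup>*)"

definition acyclic_quiver :: "('a, 'b) quiver \<Rightarrow> bool" where
  "acyclic_quiver Q \<longleftrightarrow> (\<forall>i. (i, i) \<notin> (arrow_rel Q)\<^sup>+)"

text \<open>A representation (= k Q-module): subspaces V i of an ambient k-vector space
  (with scalar multiplication sc), and k-linear maps f \<alpha> : V (src \<alpha>) \<rightarrow> V (tgt \<alpha>).\<close>
definition is_rep :: "('a, 'b) quiver \<Rightarrow> ('k::field \<Rightarrow> 'v::ab_group_add \<Rightarrow> 'v)
    \<Rightarrow> ('a \<Rightarrow> 'v set) \<Rightarrow> ('b \<Rightarrow> 'v \<Rightarrow> 'v) \<Rightarrow> bool" where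
  "is_rep Q sc V f \<longleftrightarrow> vector_space sc
     \<and> (\<forall>i\<in>verts Q. Modules.module.subspace sc (V i))
     \<and> (\<forall>\<alpha>\<in>arrs Q. \<forall>x\<in>V (src Q \<alpha>). f \<alpha> x \<in> V (tgt Q \<alpha>))
     \<and> (\<forall>\<alpha>\<in>arrs Q. \<forall>x\<in>V (src Q \<alpha>). \<forall>y\<in>V (src Q \<alpha>). f \<alpha> (x + y) = f \<alpha> x + f \<alpha> y)
     \<and> (\<forall>\<alpha>\<in>arrs Q. \<forall>c. \<forall>x\<in>V (src Q \<alpha>). f \<alpha> (sc c x) = sc c (f \<alpha> x))"

definition is_hom :: "('a, 'b) quiver
    \<Rightarrow> ('k::field \<Rightarrow> 'x::ab_group_add \<Rightarrow> 'x) \<Rightarrow> ('a \<Rightarrow> 'x set) \<Rightarrow> ('b \<Rightarrow> 'x \<Rightarrow> 'x)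
    \<Rightarrow> ('k \<Rightarrow> 'm::ab_group_add \<Rightarrow> 'm) \<Rightarrow> ('a \<Rightarrow> 'm set) \<Rightarrow> ('b \<Rightarrow> 'm \<Rightarrow> 'm)
    \<Rightarrow> ('a \<Rightarrow> 'x \<Rightarrow> 'm) \<Rightarrow> bool" where
  "is_hom Q scX VX fX scM VM fM g \<longleftrightarrow>
       (\<forall>i\<in>verts Q. \<forall>x\<in>VX i. g i x \<in> VM i)
     \<and> (\<forall>i\<in>verts Q. \<forall>x\<in>VX i. \<forall>y\<in>VX i. g i (x + y) = g i x + g i y)
     \<and> (\<forall>i\<in>verts Q. \<forall>c. \<forall>x\<in>VX i. g i (scX c x) = scM c (g i x))
     \<and> (\<forall>\<alpha>\<in>arrs Q. \<forall>x\<in>VX (src Q \<alpha>). g (tgt Q \<alpha>) (fX \<alpha> x) = fM \<alpha> (g (src Q \<alpha>) x))"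

definition hom_nonzero :: "('a, 'b) quiver
    \<Rightarrow> ('k::field \<Rightarrow> 'x::ab_group_add \<Rightarrow> 'x) \<Rightarrow> ('a \<Rightarrow> 'x set) \<Rightarrow> ('b \<Rightarrow> 'x \<Rightarrow> 'x)
    \<Rightarrow> ('k \<Rightarrow> 'm::ab_group_add \<Rightarrow> 'm) \<Rightarrow> ('a \<Rightarrow> 'm set) \<Rightarrow> ('b \<Rightarrow> 'm \<Rightarrow> 'm) \<Rightarrow> bool" where
  "hom_nonzero Q scX VX fX scM VM fM \<longleftrightarrow>
     (\<exists>g. is_hom Q scX VX fX scM VM fM g \<and> (\<exists>i\<in>verts Q. \<exists>x\<in>VX i. g i x \<noteq> 0))"

text \<open>Length of a module, computed from its set L of submodules (ordered by inclusion):
  strict chains S0 \<subset> S1 \<subset> ... \<subset> Sn have length n.\<close>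
definition strict_chain :: "'c set set \<Rightarrow> 'c set list \<Rightarrow> bool" where
  "strict_chain L cs \<longleftrightarrow> cs \<noteq> [] \<and> set cs \<subseteq> L \<and> sorted_wrt (\<subset>) cs"

definition finite_length :: "'c set set \<Rightarrow> bool" where
  "finite_length L \<longleftrightarrow> (\<exists>n. \<forall>cs. strict_chain L cs \<longrightarrow> length cs \<le> Suc n)"

definition mod_length :: "'c set set \<Rightarrow> nat" where
  "mod_length L = (GREATEST n. \<exists>cs. strict_chain L cs \<and> length cs = Suc n)"

text \<open>A subrepresentation is a family U i \<subseteq> V i of subspaces stable under the arrow maps;
  for chains, a family is identified with its total space (disjoint union of the U i).\<close>
definition subreps :: "('a, 'b) quiver \<Rightarrow> ('k::field \<Rightarrow> 'v::ab_group_add \<Rightarrow> 'v)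
    \<Rightarrow> ('a \<Rightarrow> 'v set) \<Rightarrow> ('b \<Rightarrow> 'v \<Rightarrow> 'v) \<Rightarrow> ('a \<times> 'v) set set" where
  "subreps Q sc V f = {Sigma (verts Q) U | U.
       (\<forall>i\<in>verts Q. U i \<subseteq> V i \<and> Modules.module.subspace sc (U i))
     \<and> (\<forall>\<alpha>\<in>arrs Q. \<forall>x\<in>U (src Q \<alpha>). f \<alpha> x \<in> U (tgt Q \<alpha>))}"

definition finite_length_rep :: "('a, 'b) quiver \<Rightarrow> ('k::field \<Rightarrow> 'v::ab_group_add \<Rightarrow> 'v)
    \<Rightarrow> ('a \<Rightarrow> 'v set) \<Rightarrow> ('b \<Rightarrow> 'v \<Rightarrow> 'v) \<Rightarrow> bool" where
  "finite_length_rep Q sc V f \<longleftrightarrow> finite_length (subreps Q sc V f)"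

text \<open>E(M) = End(M)^op acting on M: endomorphisms \<phi> act vertexwise.\<close>
definition End_rep :: "('a, 'b) quiver \<Rightarrow> ('k::field \<Rightarrow> 'm::ab_group_add \<Rightarrow> 'm)
    \<Rightarrow> ('a \<Rightarrow> 'm set) \<Rightarrow> ('b \<Rightarrow> 'm \<Rightarrow> 'm) \<Rightarrow> ('a \<Rightarrow> 'm \<Rightarrow> 'm) set" where
  "End_rep Q sc V f = {\<phi>. is_hom Q sc V f sc V f \<phi>}"

definition total_space :: "('a, 'b) quiver \<Rightarrow> ('a \<Rightarrow> 'm::ab_group_add set) \<Rightarrow> ('a \<Rightarrow> 'm) set" where
  "total_space Q V = {m. (\<forall>i\<in>verts Q. m i \<in> V i) \<and> (\<forall>i. i \<notin> verts Q \<longrightarrow> m i = 0)}"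

definition E_submods :: "('a, 'b) quiver \<Rightarrow> ('k::field \<Rightarrow> 'm::ab_group_add \<Rightarrow> 'm)
    \<Rightarrow> ('a \<Rightarrow> 'm set) \<Rightarrow> ('b \<Rightarrow> 'm \<Rightarrow> 'm) \<Rightarrow> ('a \<Rightarrow> 'm) set set" where
  "E_submods Q sc V f = {N. N \<subseteq> total_space Q V \<and> (\<lambda>_. 0) \<in> N
      \<and> (\<forall>m\<in>N. \<forall>n\<in>N. (\<lambda>i. m i + n i) \<in> N)
      \<and> (\<forall>\<phi>\<in>End_rep Q sc V f. \<forall>m\<in>N. (\<lambda>i. if i \<in> verts Q then \<phi> i (m i) else 0) \<in> N)}"

definition E_submods_at :: "('a, 'b) quiver \<Rightarrow> ('k::field \<Rightarrow> 'm::ab_group_add \<Rightarrow> 'm)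
    \<Rightarrow> ('a \<Rightarrow> 'm set) \<Rightarrow> ('b \<Rightarrow> 'm \<Rightarrow> 'm) \<Rightarrow> 'a \<Rightarrow> 'm set set" where
  "E_submods_at Q sc V f i = {N. N \<subseteq> V i \<and> 0 \<in> N
      \<and> (\<forall>m\<in>N. \<forall>n\<in>N. m + n \<in> N)
      \<and> (\<forall>\<phi>\<in>End_rep Q sc V f. \<forall>m\<in>N. \<phi> i m \<in> N)}"

definition endo_finite :: "('a, 'b) quiver \<Rightarrow> ('k::field \<Rightarrow> 'm::ab_group_add \<Rightarrow> 'm)
    \<Rightarrow> ('a \<Rightarrow> 'm set) \<Rightarrow> ('b \<Rightarrow> 'm \<Rightarrow> 'm) \<Rightarrow> bool" where
  "endo_finite Q sc V f \<longleftrightarrow> finite_length (E_submods Q sc V f)"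

definition dimv :: "('a, 'b) quiver \<Rightarrow> ('k::field \<Rightarrow> 'v::ab_group_add \<Rightarrow> 'v)
    \<Rightarrow> ('a \<Rightarrow> 'v set) \<Rightarrow> 'a \<Rightarrow> int" where
  "dimv Q sc V i = int (Vector_Spaces.vector_space.dim sc (V i))"

definition Dimv :: "('a, 'b) quiver \<Rightarrow> ('k::field \<Rightarrow> 'm::ab_group_add \<Rightarrow> 'm)
    \<Rightarrow> ('a \<Rightarrow> 'm set) \<Rightarrow> ('b \<Rightarrow> 'm \<Rightarrow> 'm) \<Rightarrow> 'a \<Rightarrow> int" where
  "Dimv Q sc V f i = int (mod_length (E_submods_at Q sc V f i))"

definition euler_form :: "('a, 'b) quiver \<Rightarrow> ('a \<Rightarrow> int) \<Rightarrow> ('a \<Rightarrow> int) \<Rightarrow> int" where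
  "euler_form Q x y = (\<Sum>i\<in>verts Q. x i * y i) - (\<Sum>\<alpha>\<in>arrs Q. x (src Q \<alpha>) * y (tgt Q \<alpha>))"

end

theory Submission
  imports Defs "HOL-Library.Function_Algebras"
begin


definition bnd :: "'c set set \<Rightarrow> nat \<Rightarrow> bool" where
  "bnd L n \<longleftrightarrow> (\<forall>cs. strict_chain L cs \<longrightarrow> length cs \<le> Suc n)"
definition ach :: "'c set set \<Rightarrow> nat \<Rightarrow> bool" where
  "ach L n \<longleftrightarrow> (\<exists>cs. strict_chain L cs \<and> length cs = Suc n)"

lemma mod_length_props:
  assumes "finite_length L" "N \<in> L"
  shows "bnd L (mod_length L)" "ach L (mod_length L)"
proof -
  obtain n where n: "\<forall>cs. strict_chain L cs \<longrightarrow> length cs \<le> Suc n"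
    using assms(1) unfolding finite_length_def by blast
  let ?P = "\<lambda>m. \<exists>cs. strict_chain L cs \<and> length cs = Suc m"
  have P0: "?P 0" by (rule exI[of _ "[N]"]) (simp add: strict_chain_def assms(2))
  have b: "\<forall>y. ?P y \<longrightarrow> y \<le> n" using n by fastforce
  show "ach L (mod_length L)" unfolding ach_def mod_length_def
    by (rule GreatestI_nat[of ?P 0 n, OF P0]) (use b in blast)
  show "bnd L (mod_length L)" unfolding bnd_def mod_length_def
  proof (intro allI impI)
    fix cs assume cs: "strict_chain L cs"
    then obtain m where m: "length cs = Suc m"
      by (cases cs) (auto simp: strict_chain_def)
    have "m \<le> (GREATEST m. ?P m)"
      by (rule Greatest_le_nat[of ?P m n]) (use cs m b in blast)+
    then show "length cs \<le> Suc (GREATEST m. ?P m)" using m by simp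
  qed
qed

lemma chain_map:
  assumes "strict_chain L1 cs" "\<And>N. N \<in> L1 \<Longrightarrow> h N \<in> L2"
    "\<And>N N'. N \<in> L1 \<Longrightarrow> N' \<in> L1 \<Longrightarrow> N \<subset> N' \<Longrightarrow> h N \<subset> h N'"
  shows "strict_chain L2 (map h cs)"
proof -
  have "sorted_wrt (\<subset>) cs" "set cs \<subseteq> L1" "cs \<noteq> []" using assms(1) by (auto simp: strict_chain_def)
  have "sorted_wrt (\<lambda>x y. h x \<subset> h y) cs"
  proof (rule sorted_wrt_mono_rel[OF _ \<open>sorted_wrt (\<subset>) cs\<close>])
    fix x y assume "x \<in> set cs" "y \<in> set cs" "x \<subset> y"
    then show "h x \<subset> h y" using \<open>set cs \<subseteq> L1\<close> by (intro assms(3)) auto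
  qed
  then have "sorted_wrt (\<subset>) (map h cs)" unfolding sorted_wrt_map .
  moreover have "set (map h cs) \<subseteq> L2" using \<open>set cs \<subseteq> L1\<close> assms(2) unfolding set_map by blast
  ultimately show ?thesis unfolding strict_chain_def using \<open>cs \<noteq> []\<close> by simp
qed

lemma ach_map:
  assumes "ach L1 n" "\<And>N. N \<in> L1 \<Longrightarrow> h N \<in> L2"
    "\<And>N N'. N \<in> L1 \<Longrightarrow> N' \<in> L1 \<Longrightarrow> N \<subset> N' \<Longrightarrow> h N \<subset> h N'"
  shows "ach L2 n"
proof -
  obtain cs where cs: "strict_chain L1 cs" "length cs = Suc n" using assms(1) by (auto simp: ach_def)
  have "strict_chain L2 (map h cs)" by (rule chain_map[OF cs(1) assms(2,3)])
  then show ?thesis unfolding ach_def using cs(2) by (intro exI[of _ "map h cs"]) simp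
qed

lemma bnd_map:
  assumes "bnd L2 n" "\<And>N. N \<in> L1 \<Longrightarrow> h N \<in> L2"
    "\<And>N N'. N \<in> L1 \<Longrightarrow> N' \<in> L1 \<Longrightarrow> N \<subset> N' \<Longrightarrow> h N \<subset> h N'"
  shows "bnd L1 n"
  unfolding bnd_def
proof (intro allI impI)
  fix cs assume cs: "strict_chain L1 cs"
  have "strict_chain L2 (map h cs)" by (rule chain_map[OF cs assms(2,3)])
  then show "length cs \<le> Suc n" using assms(1) unfolding bnd_def by (metis length_map)
qed

lemma ach_bnd: "ach L n \<Longrightarrow> bnd L m \<Longrightarrow> n \<le> m"
  unfolding ach_def bnd_def by fastforce

lemma chain_list:
  assumes "finite T" "\<forall>x\<in>T. \<forall>y\<in>T. x \<subseteq> y \<or> y \<subseteq> x"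
  shows "\<exists>cs. set cs = T \<and> sorted_wrt (\<subset>) cs"
  using assms
proof (induction T rule: finite_induct)
  case empty then show ?case by auto
next
  case (insert x T)
  then obtain cs where cs: "set cs = T" "sorted_wrt (\<subset>) cs" by auto
  let ?cs = "filter (\<lambda>y. y \<subset> x) cs @ x # filter (\<lambda>y. x \<subset> y) cs"
  have "set ?cs = insert x T"
  proof -
    have "y \<subset> x \<or> x \<subset> y" if "y \<in> T" for y
      using insert.prems insert.hyps(2) that by blast
    then show ?thesis using cs by auto
  qed
  moreover have "sorted_wrt (\<subset>) ?cs"
    using cs(2) by (auto simp: sorted_wrt_append sorted_wrt_filter)
  ultimately show ?case by blast
qed

lemma chain_card:
  assumes "finite T" "T \<noteq> {}" "T \<subseteq> L" "\<forall>x\<in>T. \<forall>y\<in>T. x \<subseteq> y \<or> y \<subseteq> x" "bnd L a"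
  shows "card T \<le> Suc a"
proof -
  obtain cs where cs: "set cs = T" "sorted_wrt (\<subset>) cs" using chain_list[OF assms(1) assms(4)] by blast
  have d: "distinct cs" using cs(2) by (induction cs) auto
  have "cs \<noteq> []" using cs(1) assms(2) by auto
  then have "strict_chain L cs" using cs(1,2) assms(3) unfolding strict_chain_def by simp
  then have "length cs \<le> Suc a" using assms(5) by (auto simp: bnd_def)
  then show ?thesis using distinct_card[OF d] cs(1) by simp
qed

lemma sorted_hd_le: "sorted_wrt (\<subset>) (H # r) \<Longrightarrow> N \<in> set (H # r) \<Longrightarrow> H \<subseteq> N"
  by auto

lemma chain_split_card:
  assumes mono1: "\<And>N N'. N \<in> L \<Longrightarrow> N' \<in> L \<Longrightarrow> N \<subseteq> N' \<Longrightarrow> pA N \<subseteq> pA N'"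
    and mono2: "\<And>N N'. N \<in> L \<Longrightarrow> N' \<in> L \<Longrightarrow> N \<subseteq> N' \<Longrightarrow> pB N \<subseteq> pB N'"
    and joint: "\<And>N N'. N \<in> L \<Longrightarrow> N' \<in> L \<Longrightarrow> N \<subseteq> N' \<Longrightarrow> pA N = pA N' \<Longrightarrow> pB N = pB N' \<Longrightarrow> N = N'"
  shows "set cs \<subseteq> L \<Longrightarrow> sorted_wrt (\<subset>) cs \<Longrightarrow> cs \<noteq> [] \<Longrightarrow>
    length cs + 1 \<le> card (pA ` set cs) + card (pB ` set cs)"
proof (induction cs)
  case Nil then show ?case by simp
next
  case (Cons N rest)
  show ?case
  proof (cases rest)
    case Nil then show ?thesis by simp
  next
    case (Cons H r)
    have IH: "length rest + 1 \<le> card (pA ` set rest) + card (pB ` set rest)"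
      using Cons.IH Cons.prems Cons by auto
    have NH: "N \<subset> H" using Cons.prems Cons by auto
    have L: "N \<in> L" "H \<in> L" "set rest \<subseteq> L" using Cons.prems Cons by auto
    have sr: "sorted_wrt (\<subset>) (H # r)" using Cons.prems Cons by auto
    have "pA N \<notin> pA ` set rest \<or> pB N \<notin> pB ` set rest"
    proof (rule ccontr)
      assume "\<not> ?thesis"
      then obtain N1 N2 where N12: "N1 \<in> set rest" "N2 \<in> set rest" "pA N = pA N1" "pB N = pB N2" by auto
      have HN: "H \<subseteq> N1" "H \<subseteq> N2" using sorted_hd_le[OF sr] N12 Cons by auto
      have NL: "N1 \<in> L" "N2 \<in> L" using L N12 by auto
      have "pA H \<subseteq> pA N1" "pB H \<subseteq> pB N2" using mono1[OF L(2) NL(1) HN(1)] mono2[OF L(2) NL(2) HN(2)] by auto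
      moreover have "pA N \<subseteq> pA H" "pB N \<subseteq> pB H" using mono1[OF L(1,2)] mono2[OF L(1,2)] NH by auto
      ultimately have "pA N = pA H" "pB N = pB H" using N12 by auto
      then have "N = H" using joint L NH by auto
      then show False using NH by simp
    qed
    moreover have "finite (pA ` set rest)" "finite (pB ` set rest)" by auto
    ultimately show ?thesis using IH
      by (auto simp: card_insert_if)
  qed
qed

lemma sorted_cmp: "sorted_wrt (\<subset>) cs \<Longrightarrow> x \<in> set cs \<Longrightarrow> y \<in> set cs \<Longrightarrow> x \<subseteq> y \<or> y \<subseteq> x"
  by (induction cs) auto

lemma chain_split:
  assumes mono1: "\<And>N N'. N \<in> L \<Longrightarrow> N' \<in> L \<Longrightarrow> N \<subseteq> N' \<Longrightarrow> pA N \<subseteq> pA N'"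
    and mono2: "\<And>N N'. N \<in> L \<Longrightarrow> N' \<in> L \<Longrightarrow> N \<subseteq> N' \<Longrightarrow> pB N \<subseteq> pB N'"
    and joint: "\<And>N N'. N \<in> L \<Longrightarrow> N' \<in> L \<Longrightarrow> N \<subseteq> N' \<Longrightarrow> pA N = pA N' \<Longrightarrow> pB N = pB N' \<Longrightarrow> N = N'"
    and in1: "\<And>N. N \<in> L \<Longrightarrow> pA N \<in> L1" and in2: "\<And>N. N \<in> L \<Longrightarrow> pB N \<in> L2"
    and b1: "bnd L1 a" and b2: "bnd L2 b"
  shows "bnd L (a + b)"
  unfolding bnd_def
proof (intro allI impI)
  fix cs assume cs: "strict_chain L cs"
  then have c: "set cs \<subseteq> L" "sorted_wrt (\<subset>) cs" "cs \<noteq> []" by (auto simp: strict_chain_def)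
  have 1: "length cs + 1 \<le> card (pA ` set cs) + card (pB ` set cs)"
    using chain_split_card[where L=L and pA=pA and pB=pB and cs=cs] mono1 mono2 joint c by blast
  have cmp: "\<forall>x\<in>set cs. \<forall>y\<in>set cs. x \<subseteq> y \<or> y \<subseteq> x"
    using sorted_cmp[OF c(2)] by blast
  have cmpA: "\<forall>x\<in>pA ` set cs. \<forall>y\<in>pA ` set cs. x \<subseteq> y \<or> y \<subseteq> x"
  proof (intro ballI)
    fix x y assume "x \<in> pA ` set cs" "y \<in> pA ` set cs"
    then obtain u v where uv: "u \<in> set cs" "v \<in> set cs" "x = pA u" "y = pA v" by auto
    have uL: "u \<in> L" "v \<in> L" using uv c(1) by auto
    have "u \<subseteq> v \<or> v \<subseteq> u" using cmp uv by simp
    then show "x \<subseteq> y \<or> y \<subseteq> x"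
    proof
      assume "u \<subseteq> v" then show ?thesis using mono1[OF uL(1) uL(2)] uv by simp
    next
      assume "v \<subseteq> u" then show ?thesis using mono1[OF uL(2) uL(1)] uv by simp
    qed
  qed
  have cmpB: "\<forall>x\<in>pB ` set cs. \<forall>y\<in>pB ` set cs. x \<subseteq> y \<or> y \<subseteq> x"
  proof (intro ballI)
    fix x y assume "x \<in> pB ` set cs" "y \<in> pB ` set cs"
    then obtain u v where uv: "u \<in> set cs" "v \<in> set cs" "x = pB u" "y = pB v" by auto
    have uL: "u \<in> L" "v \<in> L" using uv c(1) by auto
    have "u \<subseteq> v \<or> v \<subseteq> u" using cmp uv by simp
    then show "x \<subseteq> y \<or> y \<subseteq> x"
    proof
      assume "u \<subseteq> v" then show ?thesis using mono2[OF uL(1) uL(2)] uv by simp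
    next
      assume "v \<subseteq> u" then show ?thesis using mono2[OF uL(2) uL(1)] uv by simp
    qed
  qed
  have "card (pA ` set cs) \<le> Suc a"
    by (rule chain_card[OF _ _ _ cmpA b1]) (use c in1 in \<open>force+\<close>)
  moreover have "card (pB ` set cs) \<le> Suc b"
    by (rule chain_card[OF _ _ _ cmpB b2]) (use c in2 in \<open>force+\<close>)
  ultimately show "length cs \<le> Suc (a + b)" using 1 by simp
qed

lemma last_max: "sorted_wrt (\<subset>) cs \<Longrightarrow> N \<in> set cs \<Longrightarrow> N \<subseteq> last cs"
proof (induction cs)
  case (Cons a cs) then show ?case by (cases cs) auto
qed simp

lemma ach_comb:
  assumes a1: "ach L1 a" and a2: "ach L2 b"
    and inL: "\<And>N1 N2. N1 \<in> L1 \<Longrightarrow> N2 \<in> L2 \<Longrightarrow> comb N1 N2 \<in> L"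
    and mono: "\<And>N1 N1' N2 N2'. N1 \<in> L1 \<Longrightarrow> N1' \<in> L1 \<Longrightarrow> N2 \<in> L2 \<Longrightarrow> N2' \<in> L2 \<Longrightarrow>
        N1 \<subseteq> N1' \<Longrightarrow> N2 \<subseteq> N2' \<Longrightarrow> comb N1 N2 \<subseteq> comb N1' N2'"
    and s1: "\<And>N1 N1' N2. N1 \<in> L1 \<Longrightarrow> N1' \<in> L1 \<Longrightarrow> N2 \<in> L2 \<Longrightarrow> N1 \<subset> N1' \<Longrightarrow> comb N1 N2 \<subset> comb N1' N2"
    and s2: "\<And>N1 N2 N2'. N1 \<in> L1 \<Longrightarrow> N2 \<in> L2 \<Longrightarrow> N2' \<in> L2 \<Longrightarrow> N2 \<subset> N2' \<Longrightarrow> comb N1 N2 \<subset> comb N1 N2'"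
  shows "ach L (a + b)"
proof -
  obtain cs1 where c1: "strict_chain L1 cs1" "length cs1 = Suc a" using a1 by (auto simp: ach_def)
  obtain cs2 where c2: "strict_chain L2 cs2" "length cs2 = Suc b" using a2 by (auto simp: ach_def)
  obtain H r where H: "cs2 = H # r" using c2 by (cases cs2) auto
  have s1': "set cs1 \<subseteq> L1" "sorted_wrt (\<subset>) cs1" "cs1 \<noteq> []" using c1 by (auto simp: strict_chain_def)
  have s2': "set cs2 \<subseteq> L2" "sorted_wrt (\<subset>) cs2" using c2 by (auto simp: strict_chain_def)
  have lastin: "last cs1 \<in> L1" using s1' by auto
  let ?cs = "map (\<lambda>N. comb N H) cs1 @ map (comb (last cs1)) r"
  have HL: "H \<in> L2" using s2' H by auto
  have "sorted_wrt (\<lambda>x y. comb x H \<subset> comb y H) cs1"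
    by (rule sorted_wrt_mono_rel[OF _ s1'(2)]) (use s1' HL s1 in blast)
  then have "sorted_wrt (\<subset>) (map (\<lambda>N. comb N H) cs1)"
    unfolding sorted_wrt_map .
  moreover have sr: "sorted_wrt (\<subset>) r" "set r \<subseteq> L2" using s2' H by auto
  have "sorted_wrt (\<lambda>x y. comb (last cs1) x \<subset> comb (last cs1) y) r"
    by (rule sorted_wrt_mono_rel[OF _ sr(1)]) (use sr s2 lastin in blast)
  then have "sorted_wrt (\<subset>) (map (comb (last cs1)) r)"
    unfolding sorted_wrt_map .
  moreover have "comb N H \<subset> comb (last cs1) N2" if "N \<in> set cs1" "N2 \<in> set r" for N N2
  proof -
    have "comb N H \<subseteq> comb (last cs1) H"
      using mono[of N "last cs1" H H] that s1' s2' H lastin last_max[OF s1'(2) that(1)] by auto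
    also have "\<dots> \<subset> comb (last cs1) N2"
      by (rule s2[OF lastin HL]) (use that sr s2' H in auto)
    finally show ?thesis .
  qed
  ultimately have "sorted_wrt (\<subset>) ?cs" by (auto simp: sorted_wrt_append)
  moreover have "set ?cs \<subseteq> L" using s1' s2' H lastin inL by auto
  moreover have "length ?cs = Suc (a + b)" using c1 c2 H by simp
  ultimately show ?thesis unfolding ach_def strict_chain_def by (intro exI[of _ ?cs]) auto
qed




definition Prod :: "'j set \<Rightarrow> ('j \<Rightarrow> 'v::ab_group_add set) \<Rightarrow> ('j \<Rightarrow> 'v) set" where
  "Prod J S = {p. (\<forall>j\<in>J. p j \<in> S j) \<and> (\<forall>j. j \<notin> J \<longrightarrow> p j = 0)}"

definition Sub :: "'j set \<Rightarrow> ('j \<Rightarrow> 'v::ab_group_add set) \<Rightarrow> 'e set \<Rightarrow> ('e \<Rightarrow> 'j \<Rightarrow> 'v \<Rightarrow> 'v)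
    \<Rightarrow> ('j \<Rightarrow> 'v) set set" where
  "Sub J S E act = {N. N \<subseteq> Prod J S \<and> 0 \<in> N \<and> (\<forall>p\<in>N. \<forall>q\<in>N. p + q \<in> N)
     \<and> (\<forall>e\<in>E. \<forall>p\<in>N. (\<lambda>j. if j \<in> J then act e j (p j) else 0) \<in> N)}"

definition Subat :: "'v::ab_group_add set \<Rightarrow> 'e set \<Rightarrow> ('e \<Rightarrow> 'v \<Rightarrow> 'v) \<Rightarrow> 'v set set" where
  "Subat S E a = {N. N \<subseteq> S \<and> 0 \<in> N \<and> (\<forall>m\<in>N. \<forall>n\<in>N. m + n \<in> N) \<and> (\<forall>e\<in>E. \<forall>m\<in>N. a e m \<in> N)}"

lemma Sub_empty: "N \<in> Sub {} S E act \<Longrightarrow> N = {0}"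
  unfolding Sub_def Prod_def by (auto simp: fun_eq_iff)

lemma bnd_Sub_empty: "bnd (Sub {} S E act) 0"
  unfolding bnd_def strict_chain_def
proof (intro allI impI)
  fix cs :: "('a \<Rightarrow> 'b) set list"
  assume "cs \<noteq> [] \<and> set cs \<subseteq> Sub {} S E act \<and> sorted_wrt (\<subset>) cs"
  then have h: "\<forall>N\<in>set cs. N = {0}" "sorted_wrt (\<subset>) cs" using Sub_empty by blast+
  show "length cs \<le> Suc 0"
  proof (cases cs)
    case (Cons a r) then show ?thesis using h by (cases r) auto
  qed simp
qed

lemma ach_Sub_empty: "ach (Sub {} S E act) 0"
  unfolding ach_def strict_chain_def
  by (rule exI[of _ "[{0}]"]) (auto simp: Sub_def Prod_def)

lemma SubD:
  assumes "N \<in> Sub J S E act"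
  shows "N \<subseteq> Prod J S" "0 \<in> N" "\<And>p q. p \<in> N \<Longrightarrow> q \<in> N \<Longrightarrow> p + q \<in> N"
    "\<And>e p. e \<in> E \<Longrightarrow> p \<in> N \<Longrightarrow> (\<lambda>j. if j \<in> J then act e j (p j) else 0) \<in> N"
  using assms unfolding Sub_def by blast+

lemma SubI:
  assumes "N \<subseteq> Prod J S" "0 \<in> N" "\<And>p q. p \<in> N \<Longrightarrow> q \<in> N \<Longrightarrow> p + q \<in> N"
    "\<And>e p. e \<in> E \<Longrightarrow> p \<in> N \<Longrightarrow> (\<lambda>j. if j \<in> J then act e j (p j) else 0) \<in> N"
  shows "N \<in> Sub J S E act"
  using assms unfolding Sub_def by blast

lemma SubatD:
  assumes "N \<in> Subat S E a"
  shows "N \<subseteq> S" "0 \<in> N" "\<And>m n. m \<in> N \<Longrightarrow> n \<in> N \<Longrightarrow> m + n \<in> N"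
    "\<And>e m. e \<in> E \<Longrightarrow> m \<in> N \<Longrightarrow> a e m \<in> N"
  using assms unfolding Subat_def by blast+

lemma SubatI:
  assumes "N \<subseteq> S" "0 \<in> N" "\<And>m n. m \<in> N \<Longrightarrow> n \<in> N \<Longrightarrow> m + n \<in> N"
    "\<And>e m. e \<in> E \<Longrightarrow> m \<in> N \<Longrightarrow> a e m \<in> N"
  shows "N \<in> Subat S E a"
  using assms unfolding Subat_def by blast

lemma ProdD: "p \<in> Prod J S \<Longrightarrow> j \<in> J \<Longrightarrow> p j \<in> S j" "p \<in> Prod J S \<Longrightarrow> j \<notin> J \<Longrightarrow> p j = 0"
  unfolding Prod_def by blast+

lemma Sub_upper:
  assumes "finite J"
    and neg: "\<exists>e\<in>E. \<forall>j\<in>J. \<forall>x\<in>S j. act e j x = - x"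
    and zero: "\<forall>e\<in>E. \<forall>j\<in>J. act e j 0 = 0"
    and b: "\<forall>j\<in>J. bnd (Subat (S j) E (\<lambda>e. act e j)) (d j)"
  shows "bnd (Sub J S E act) (\<Sum>j\<in>J. d j)"
  using assms
proof (induction J rule: finite_induct)
  case empty then show ?case using bnd_Sub_empty by simp
next
  case (insert j J)
  have IH: "bnd (Sub J S E act) (\<Sum>j\<in>J. d j)"
    by (rule insert.IH) (use insert.prems in blast)+
  have bj: "bnd (Subat (S j) E (\<lambda>e. act e j)) (d j)" using insert.prems(3) by simp
  obtain e0 where e0: "e0 \<in> E" "\<And>k x. k \<in> insert j J \<Longrightarrow> x \<in> S k \<Longrightarrow> act e0 k x = - x"
    using insert.prems(1) by blast
  have z: "\<And>e k. e \<in> E \<Longrightarrow> k \<in> insert j J \<Longrightarrow> act e k 0 = 0" using insert.prems(2) by blast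
  have jJ: "j \<notin> J" by fact
  let ?L = "Sub (insert j J) S E act"
  let ?pA = "\<lambda>N. {p\<in>N. p j = 0}"
  let ?pB = "\<lambda>N. (\<lambda>p. p j) ` N"
  have "bnd ?L ((\<Sum>j\<in>J. d j) + d j)"
  proof (rule chain_split[where pA = ?pA and pB = ?pB, OF _ _ _ _ _ IH bj])
    show "?pA N \<subseteq> ?pA N'" if "N \<subseteq> N'" for N N' using that by blast
    show "?pB N \<subseteq> ?pB N'" if "N \<subseteq> N'" for N N' using that by blast
    show "?pA N \<in> Sub J S E act" if N: "N \<in> ?L" for N
    proof (rule SubI)
      show "?pA N \<subseteq> Prod J S"
      proof
        fix p assume p: "p \<in> ?pA N"
        then have pP: "p \<in> Prod (insert j J) S" using SubD(1)[OF N] by auto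
        show "p \<in> Prod J S" unfolding Prod_def
        proof (intro CollectI conjI allI ballI impI)
          fix k assume "k \<in> J" then show "p k \<in> S k" using ProdD(1)[OF pP] by simp
        next
          fix k assume "k \<notin> J" then show "p k = 0" using ProdD(2)[OF pP, of k] p by (cases "k = j") auto
        qed
      qed
      show "0 \<in> ?pA N" using SubD(2)[OF N] by simp
      show "p + q \<in> ?pA N" if "p \<in> ?pA N" "q \<in> ?pA N" for p q using that SubD(3)[OF N, of p q] by simp
      show "(\<lambda>k. if k \<in> J then act e k (p k) else 0) \<in> ?pA N" if e: "e \<in> E" and p: "p \<in> ?pA N" for e p
      proof -
        have "(\<lambda>k. if k \<in> insert j J then act e k (p k) else 0) \<in> N" using SubD(4)[OF N e] p by simp
        moreover have "(\<lambda>k. if k \<in> insert j J then act e k (p k) else 0) = (\<lambda>k. if k \<in> J then act e k (p k) else 0)"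
        proof
          fix k show "(if k \<in> insert j J then act e k (p k) else 0) = (if k \<in> J then act e k (p k) else 0)"
            using p z[OF e, of j] jJ by (cases "k = j") auto
        qed
        ultimately show ?thesis using jJ by simp
      qed
    qed
    show "?pB N \<in> Subat (S j) E (\<lambda>e. act e j)" if N: "N \<in> ?L" for N
    proof (rule SubatI)
      show "?pB N \<subseteq> S j"
      proof
        fix m assume "m \<in> ?pB N"
        then obtain p where p: "p \<in> N" "m = p j" by blast
        have "p \<in> Prod (insert j J) S" using p(1) SubD(1)[OF N] by (rule subsetD[rotated])
        then show "m \<in> S j" using p(2) ProdD(1)[OF _ insertI1] by simp
      qed
      show "0 \<in> ?pB N" using SubD(2)[OF N] by (intro image_eqI[where x=0]) simp_all
      show "m + n \<in> ?pB N" if mn: "m \<in> ?pB N" "n \<in> ?pB N" for m n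
      proof -
        obtain p q where pq: "p \<in> N" "q \<in> N" "m = p j" "n = q j" using mn by blast
        have "p + q \<in> N" by (rule SubD(3)[OF N pq(1,2)])
        moreover have "m + n = (p + q) j" using pq by simp
        ultimately show ?thesis by blast
      qed
      show "act e j m \<in> ?pB N" if e: "e \<in> E" and m: "m \<in> ?pB N" for e m
      proof -
        obtain p where p: "p \<in> N" "m = p j" using m by blast
        have "(\<lambda>k. if k \<in> insert j J then act e k (p k) else 0) \<in> N" using SubD(4)[OF N e p(1)] .
        then show ?thesis using p by (intro image_eqI[where x="(\<lambda>k. if k \<in> insert j J then act e k (p k) else 0)"]) simp_all
      qed
    qed
    show "N = N'" if N: "N \<in> ?L" "N' \<in> ?L" "N \<subseteq> N'" "?pA N = ?pA N'" "?pB N = ?pB N'" for N N'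
    proof
      show "N' \<subseteq> N"
      proof
        fix q assume q: "q \<in> N'"
        then have "q j \<in> ?pB N'" by (rule imageI)
        then have "q j \<in> ?pB N" using N(5) by simp
        then obtain p where p0: "q j = p j" "p \<in> N" by (rule imageE)
        then have p: "p \<in> N" "p j = q j" by simp_all
        have pP: "p \<in> Prod (insert j J) S" using p(1) SubD(1)[OF N(1)] by (rule subsetD[rotated])
        have "(\<lambda>k. if k \<in> insert j J then act e0 k (p k) else 0) \<in> N" using SubD(4)[OF N(1) e0(1) p(1)] .
        moreover have "(\<lambda>k. if k \<in> insert j J then act e0 k (p k) else 0) = - p"
        proof
          fix k show "(if k \<in> insert j J then act e0 k (p k) else 0) = (- p) k"
            using e0(2)[of k "p k"] ProdD[OF pP, of k] by auto
        qed
        ultimately have "- p \<in> N" by simp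
        then have "- p \<in> N'" using N(3) by (rule subsetD[rotated])
        then have qp: "q + - p \<in> N'" by (rule SubD(3)[OF N(2) q])
        moreover have "(q + - p) j = 0" using p by simp
        ultimately have "q + - p \<in> ?pA N'" by simp
        then have "q + - p \<in> ?pA N" using N(4) by simp
        then have "q + - p \<in> N" by simp
        then have "(q + - p) + p \<in> N" by (rule SubD(3)[OF N(1) _ p(1)])
        then show "q \<in> N" by simp
      qed
    qed fact
  qed
  then show ?case using insert.hyps by (simp add: add.commute)
qed

lemma Sub_lower:
  assumes "finite J"
    and a: "\<forall>j\<in>J. ach (Subat (S j) E (\<lambda>e. act e j)) (d j)"
  shows "ach (Sub J S E act) (\<Sum>j\<in>J. d j)"
  using assms
proof (induction J rule: finite_induct)
  case empty then show ?case using ach_Sub_empty by simp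
next
  case (insert j J)
  have IH: "ach (Sub J S E act) (\<Sum>j\<in>J. d j)" by (rule insert.IH) (use insert.prems in simp)
  have aj: "ach (Subat (S j) E (\<lambda>e. act e j)) (d j)" using insert.prems by simp
  have jJ: "j \<notin> J" by fact
  let ?L = "Sub (insert j J) S E act"
  let ?r = "\<lambda>p::'a \<Rightarrow> 'b. (\<lambda>k. if k = j then 0 else p k)"
  let ?comb = "\<lambda>N1 N2. {p. ?r p \<in> N1 \<and> p j \<in> N2}"
  have "ach ?L ((\<Sum>j\<in>J. d j) + d j)"
  proof (rule ach_comb[where comb = ?comb, OF IH aj])
    show "?comb N1 N2 \<in> ?L" if N1: "N1 \<in> Sub J S E act" and N2: "N2 \<in> Subat (S j) E (\<lambda>e. act e j)" for N1 N2
    proof (rule SubI)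
      show "?comb N1 N2 \<subseteq> Prod (insert j J) S"
      proof
        fix p assume p: "p \<in> ?comb N1 N2"
        then have rp: "?r p \<in> Prod J S" using SubD(1)[OF N1] by auto
        have pj: "p j \<in> S j" using p SubatD(1)[OF N2] by auto
        show "p \<in> Prod (insert j J) S" unfolding Prod_def
        proof (intro CollectI conjI allI ballI impI)
          fix k assume k: "k \<in> insert j J"
          show "p k \<in> S k"
          proof (cases "k = j")
            case True then show ?thesis using pj by simp
          next
            case False then have "k \<in> J" using k by simp
            then have "?r p k \<in> S k" using ProdD(1)[OF rp] by blast
            then show ?thesis using False by simp
          qed
        next
          fix k assume k: "k \<notin> insert j J"
          then have "?r p k = 0" using ProdD(2)[OF rp, of k] by simp
          then show "p k = 0" using k by simp
        qed
      qed
      show "0 \<in> ?comb N1 N2"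
      proof -
        have "?r 0 = 0" by (simp add: fun_eq_iff)
        then show ?thesis using SubD(2)[OF N1] SubatD(2)[OF N2] by simp
      qed
      show "p + q \<in> ?comb N1 N2" if pq: "p \<in> ?comb N1 N2" "q \<in> ?comb N1 N2" for p q
      proof -
        have "?r (p + q) = ?r p + ?r q" by (simp add: fun_eq_iff)
        moreover have "?r p + ?r q \<in> N1" using pq SubD(3)[OF N1] by simp
        moreover have "p j + q j \<in> N2" using pq SubatD(3)[OF N2] by simp
        ultimately show ?thesis by simp
      qed
      show "(\<lambda>k. if k \<in> insert j J then act e k (p k) else 0) \<in> ?comb N1 N2"
        if e: "e \<in> E" and p: "p \<in> ?comb N1 N2" for e p
      proof -
        define F where "F = (\<lambda>k. if k \<in> insert j J then act e k (p k) else 0)"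
        have "?r F = (\<lambda>k. if k \<in> J then act e k (?r p k) else 0)"
          unfolding F_def using jJ by (simp add: fun_eq_iff)
        moreover have "(\<lambda>k. if k \<in> J then act e k (?r p k) else 0) \<in> N1" using p SubD(4)[OF N1 e] by simp
        ultimately have "?r F \<in> N1" by simp
        moreover have "F j \<in> N2" unfolding F_def using p SubatD(4)[OF N2 e] by simp
        ultimately have "F \<in> ?comb N1 N2" by simp
        then show ?thesis unfolding F_def .
      qed
    qed
    show "?comb N1 N2 \<subseteq> ?comb N1' N2'" if "N1 \<subseteq> N1'" "N2 \<subseteq> N2'" for N1 N1' N2 N2'
      using that by auto
    show "?comb N1 N2 \<subset> ?comb N1' N2" if N: "N1 \<in> Sub J S E act" "N1' \<in> Sub J S E act"
      "N2 \<in> Subat (S j) E (\<lambda>e. act e j)" "N1 \<subset> N1'" for N1 N1' N2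
    proof -
      obtain r where "r \<in> N1' - N1" using psubset_imp_ex_mem[OF N(4)] by (elim exE)
      then have r: "r \<in> N1'" "r \<notin> N1" by simp_all
      have "r \<in> Prod J S" using r(1) SubD(1)[OF N(2)] by (rule subsetD[rotated])
      then have "r j = 0" using jJ by (rule ProdD(2))
      then have rr: "?r r = r" by (simp add: fun_eq_iff)
      have c1: "?r r \<in> N1'" using rr r(1) by simp
      have c2: "r j \<in> N2" using \<open>r j = 0\<close> SubatD(2)[OF N(3)] by simp
      have in1: "r \<in> ?comb N1' N2" using c1 c2 by (intro CollectI conjI)
      have in2: "r \<notin> ?comb N1 N2"
      proof
        assume "r \<in> ?comb N1 N2"
        then have "?r r \<in> N1" by simp
        then show False using rr r(2) by simp
      qed
      have sub: "?comb N1 N2 \<subseteq> ?comb N1' N2"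
      proof (rule subsetI)
        fix p assume "p \<in> ?comb N1 N2"
        then have "?r p \<in> N1" "p j \<in> N2" by simp_all
        then have "?r p \<in> N1'" "p j \<in> N2" using psubset_imp_subset[OF N(4)] by blast+
        then show "p \<in> ?comb N1' N2" by (intro CollectI conjI)
      qed
      show ?thesis
      proof (rule psubsetI[OF sub])
        show "?comb N1 N2 \<noteq> ?comb N1' N2" using in1 in2 by metis
      qed
    qed
    show "?comb N1 N2 \<subset> ?comb N1 N2'" if N: "N1 \<in> Sub J S E act" "N2 \<in> Subat (S j) E (\<lambda>e. act e j)"
      "N2' \<in> Subat (S j) E (\<lambda>e. act e j)" "N2 \<subset> N2'" for N1 N2 N2'
    proof -
      obtain m where "m \<in> N2' - N2" using psubset_imp_ex_mem[OF N(4)] by (elim exE)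
      then have m: "m \<in> N2'" "m \<notin> N2" by simp_all
      let ?p = "\<lambda>k. if k = j then m else 0"
      have "?r ?p = 0" by (simp add: fun_eq_iff)
      then have rp: "?r ?p \<in> N1" using SubD(2)[OF N(1)] by simp
      have in1: "?p \<in> ?comb N1 N2'" using rp m(1) by (intro CollectI conjI) simp_all
      have in2: "?p \<notin> ?comb N1 N2"
      proof
        assume "?p \<in> ?comb N1 N2"
        then have "?p j \<in> N2" by simp
        then show False using m(2) by simp
      qed
      have sub: "?comb N1 N2 \<subseteq> ?comb N1 N2'"
      proof (rule subsetI)
        fix p assume "p \<in> ?comb N1 N2"
        then have "?r p \<in> N1" "p j \<in> N2" by simp_all
        then have "?r p \<in> N1" "p j \<in> N2'" using psubset_imp_subset[OF N(4)] by blast+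
        then show "p \<in> ?comb N1 N2'" by (intro CollectI conjI)
      qed
      show ?thesis
      proof (rule psubsetI[OF sub])
        show "?comb N1 N2 \<noteq> ?comb N1 N2'" using in1 in2 by metis
      qed
    qed
  qed
  then show ?case using insert.hyps by (simp add: add.commute)
qed




lemma add_sum:
  fixes f :: "'a::ab_group_add \<Rightarrow> 'b::ab_group_add"
  assumes "0 \<in> V" "\<forall>x\<in>V. \<forall>y\<in>V. x + y \<in> V"
    and add: "\<forall>x\<in>V. \<forall>y\<in>V. f (x + y) = f x + f y"
    and "finite A" "\<forall>a\<in>A. v a \<in> V"
  shows "f (sum v A) = (\<Sum>a\<in>A. f (v a)) \<and> sum v A \<in> V"
  using assms(4,5)
proof (induction A rule: finite_induct)
  case empty
  have "f (0 + 0) = f 0 + f 0" using add assms(1) by blast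
  then show ?case using assms(1) by simp
next
  case (insert a A)
  then show ?case using assms(2) add by auto
qed

lemma add_diff:
  fixes f :: "'a::ab_group_add \<Rightarrow> 'b::ab_group_add"
  assumes add: "\<forall>x\<in>V. \<forall>y\<in>V. f (x + y) = f x + f y" and "x - y \<in> V" "y \<in> V"
  shows "f (x - y) = f x - f y"
proof -
  have "f ((x - y) + y) = f (x - y) + f y" using add assms by blast
  then show ?thesis by (simp add: algebra_simps)
qed

locale setting = X: vector_space scX + M: vector_space scM
  for scX :: "'k::field \<Rightarrow> 'x::ab_group_add \<Rightarrow> 'x" and scM :: "'k \<Rightarrow> 'm::ab_group_add \<Rightarrow> 'm" +
  fixes Q :: "('a, 'b) quiver" and VX :: "'a \<Rightarrow> 'x set" and fX :: "'b \<Rightarrow> 'x \<Rightarrow> 'x"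
    and VM :: "'a \<Rightarrow> 'm set" and fM :: "'b \<Rightarrow> 'm \<Rightarrow> 'm" and B :: "'a \<Rightarrow> 'x set"
  assumes fq: "finite_quiver Q" and repX: "is_rep Q scX VX fX" and repM: "is_rep Q scM VM fM"
    and Bfin: "\<forall>i\<in>verts Q. finite (B i)" and Bsub: "\<forall>i\<in>verts Q. B i \<subseteq> VX i"
    and Bind: "\<forall>i\<in>verts Q. X.independent (B i)" and Bspan: "\<forall>i\<in>verts Q. VX i \<subseteq> X.span (B i)"
    and nohom: "\<not> hom_nonzero Q scX VX fX scM VM fM"
begin

lemma st: "\<And>\<alpha>. \<alpha> \<in> arrs Q \<Longrightarrow> src Q \<alpha> \<in> verts Q" "\<And>\<alpha>. \<alpha> \<in> arrs Q \<Longrightarrow> tgt Q \<alpha> \<in> verts Q"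
  using fq by (auto simp: finite_quiver_def)

lemma subX: "i \<in> verts Q \<Longrightarrow> X.subspace (VX i)" using repX by (auto simp: is_rep_def)
lemma subM: "i \<in> verts Q \<Longrightarrow> M.subspace (VM i)" using repM by (auto simp: is_rep_def)
lemma fX_in: "\<alpha> \<in> arrs Q \<Longrightarrow> x \<in> VX (src Q \<alpha>) \<Longrightarrow> fX \<alpha> x \<in> VX (tgt Q \<alpha>)" using repX by (auto simp: is_rep_def)
lemma fX_add: "\<alpha> \<in> arrs Q \<Longrightarrow> \<forall>x\<in>VX (src Q \<alpha>). \<forall>y\<in>VX (src Q \<alpha>). fX \<alpha> (x + y) = fX \<alpha> x + fX \<alpha> y" using repX by (auto simp: is_rep_def)
lemma fX_sc: "\<alpha> \<in> arrs Q \<Longrightarrow> x \<in> VX (src Q \<alpha>) \<Longrightarrow> fX \<alpha> (scX c x) = scX c (fX \<alpha> x)" using repX by (auto simp: is_rep_def)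
lemma fM_in: "\<alpha> \<in> arrs Q \<Longrightarrow> x \<in> VM (src Q \<alpha>) \<Longrightarrow> fM \<alpha> x \<in> VM (tgt Q \<alpha>)" using repM by (auto simp: is_rep_def)
lemma fM_add: "\<alpha> \<in> arrs Q \<Longrightarrow> \<forall>x\<in>VM (src Q \<alpha>). \<forall>y\<in>VM (src Q \<alpha>). fM \<alpha> (x + y) = fM \<alpha> x + fM \<alpha> y" using repM by (auto simp: is_rep_def)
lemma fM_sc: "\<alpha> \<in> arrs Q \<Longrightarrow> x \<in> VM (src Q \<alpha>) \<Longrightarrow> fM \<alpha> (scM c x) = scM c (fM \<alpha> x)" using repM by (auto simp: is_rep_def)

lemma subM_add: "i \<in> verts Q \<Longrightarrow> \<forall>x\<in>VM i. \<forall>y\<in>VM i. x + y \<in> VM i" using subM M.subspace_add by blast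
lemma subX_add: "i \<in> verts Q \<Longrightarrow> \<forall>x\<in>VX i. \<forall>y\<in>VX i. x + y \<in> VX i" using subX X.subspace_add by blast

lemma fM_sum: "\<alpha> \<in> arrs Q \<Longrightarrow> finite A \<Longrightarrow> \<forall>a\<in>A. v a \<in> VM (src Q \<alpha>) \<Longrightarrow> fM \<alpha> (sum v A) = (\<Sum>a\<in>A. fM \<alpha> (v a))"
  using add_sum[OF M.subspace_0[OF subM] subM_add fM_add] st by blast
lemma fX_sum: "\<alpha> \<in> arrs Q \<Longrightarrow> finite A \<Longrightarrow> \<forall>a\<in>A. v a \<in> VX (src Q \<alpha>) \<Longrightarrow> fX \<alpha> (sum v A) = (\<Sum>a\<in>A. fX \<alpha> (v a))"
  using add_sum[OF X.subspace_0[OF subX] subX_add fX_add] st by blast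

definition E where "E = End_rep Q scM VM fM"

lemma E_props:
  assumes "\<phi> \<in> E" "i \<in> verts Q"
  shows "\<forall>x\<in>VM i. \<phi> i x \<in> VM i" "\<forall>x\<in>VM i. \<forall>y\<in>VM i. \<phi> i (x + y) = \<phi> i x + \<phi> i y"
    "\<And>c x. x \<in> VM i \<Longrightarrow> \<phi> i (scM c x) = scM c (\<phi> i x)" "\<phi> i 0 = 0"
proof -
  show 1: "\<forall>x\<in>VM i. \<phi> i x \<in> VM i" "\<forall>x\<in>VM i. \<forall>y\<in>VM i. \<phi> i (x + y) = \<phi> i x + \<phi> i y"
    "\<And>c x. x \<in> VM i \<Longrightarrow> \<phi> i (scM c x) = scM c (\<phi> i x)"
    using assms by (auto simp: E_def End_rep_def is_hom_def)
  have "\<phi> i (0 + 0) = \<phi> i 0 + \<phi> i 0" using 1(2) M.subspace_0[OF subM[OF assms(2)]] by blast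
  then show "\<phi> i 0 = 0" by simp
qed

lemma E_arr: "\<phi> \<in> E \<Longrightarrow> \<alpha> \<in> arrs Q \<Longrightarrow> x \<in> VM (src Q \<alpha>) \<Longrightarrow> \<phi> (tgt Q \<alpha>) (fM \<alpha> x) = fM \<alpha> (\<phi> (src Q \<alpha>) x)"
  by (auto simp: E_def End_rep_def is_hom_def)

lemma fM_0: "\<alpha> \<in> arrs Q \<Longrightarrow> fM \<alpha> 0 = 0"
  using add_diff[OF fM_add, of \<alpha> 0 0] M.subspace_0[OF subM[OF st(1)]] by simp

lemma neg_E: "(\<lambda>i x. - x) \<in> E"
proof -
  have "fM \<alpha> (- x) = - fM \<alpha> x" if "\<alpha> \<in> arrs Q" "x \<in> VM (src Q \<alpha>)" for \<alpha> x
    using add_diff[OF fM_add[OF that(1)], of 0 x] that M.subspace_neg[OF subM[OF st(1)]] fM_0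
    by simp
  then show ?thesis
    unfolding E_def End_rep_def is_hom_def
    using M.subspace_neg[OF subM] by (auto simp: M.scale_minus_right)
qed

definition gm :: "('a \<times> 'x \<Rightarrow> 'm) \<Rightarrow> 'a \<Rightarrow> 'x \<Rightarrow> 'm" where
  "gm m i y = (\<Sum>b\<in>B i. scM (X.representation (B i) y b) (m (i, b)))"

definition JD where "JD = Sigma (verts Q) B"
definition JC where "JC = Sigma (arrs Q) (\<lambda>\<alpha>. B (src Q \<alpha>))"
definition SD :: "'a \<times> 'x \<Rightarrow> 'm set" where "SD j = VM (fst j)"
definition SC :: "'b \<times> 'x \<Rightarrow> 'm set" where "SC j = VM (tgt Q (fst j))"
definition actD :: "('a \<Rightarrow> 'm \<Rightarrow> 'm) \<Rightarrow> 'a \<times> 'x \<Rightarrow> 'm \<Rightarrow> 'm" where "actD \<phi> j = \<phi> (fst j)"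
definition actC :: "('a \<Rightarrow> 'm \<Rightarrow> 'm) \<Rightarrow> 'b \<times> 'x \<Rightarrow> 'm \<Rightarrow> 'm" where "actC \<phi> j = \<phi> (tgt Q (fst j))"

definition Phi :: "('a \<times> 'x \<Rightarrow> 'm) \<Rightarrow> ('b \<times> 'x \<Rightarrow> 'm)" where
  "Phi m = (\<lambda>j. if j \<in> JC then gm m (tgt Q (fst j)) (fX (fst j) (snd j)) - fM (fst j) (m (src Q (fst j), snd j)) else 0)"

lemma PD: "m \<in> Prod JD SD \<Longrightarrow> i \<in> verts Q \<Longrightarrow> b \<in> B i \<Longrightarrow> m (i, b) \<in> VM i"
  by (auto simp: Prod_def JD_def SD_def)

lemma gm_in: "i \<in> verts Q \<Longrightarrow> \<forall>b\<in>B i. m (i, b) \<in> VM i \<Longrightarrow> gm m i y \<in> VM i"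
  unfolding gm_def by (intro M.subspace_sum[OF subM] M.subspace_scale[OF subM]) auto

lemma gm_add_y:
  assumes "i \<in> verts Q" "y \<in> VX i" "z \<in> VX i"
  shows "gm m i (y + z) = gm m i y + gm m i z"
proof -
  have "X.representation (B i) (y + z) = (\<lambda>b. X.representation (B i) y b + X.representation (B i) z b)"
    using X.representation_add[of "B i" z y] Bind Bspan assms by auto
  then show ?thesis unfolding gm_def by (simp add: M.scale_left_distrib sum.distrib)
qed

lemma gm_sc_y:
  assumes "i \<in> verts Q" "y \<in> VX i"
  shows "gm m i (scX c y) = scM c (gm m i y)"
proof -
  have "X.representation (B i) (scX c y) = (\<lambda>b. c * X.representation (B i) y b)"
    using X.representation_scale[of "B i" y c] Bind Bspan assms by auto
  then show ?thesis unfolding gm_def by (simp add: M.scale_sum_right)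
qed

lemma gm_basis:
  assumes "i \<in> verts Q" "b \<in> B i"
  shows "gm m i b = m (i, b)"
proof -
  have r: "X.representation (B i) b = (\<lambda>v. if v = b then 1 else 0)"
    using X.representation_basis[of "B i" b] Bind assms by auto
  have "(\<Sum>b'\<in>B i. scM (if b' = b then 1 else 0) (m (i, b'))) = (\<Sum>b'\<in>B i. if b' = b then m (i, b) else 0)"
    by (rule sum.cong) auto
  also have "\<dots> = m (i, b)" using assms Bfin by simp
  finally show ?thesis unfolding gm_def r .
qed

lemma gm_add_m: "gm (p + q) i y = gm p i y + gm q i y"
  unfolding gm_def by (simp add: M.scale_right_distrib sum.distrib)
lemma gm_diff_m: "gm (p - q) i y = gm p i y - gm q i y"
  unfolding gm_def by (simp add: M.scale_right_diff_distrib sum_subtractf)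
lemma gm_zero_m: "gm 0 i y = 0"
  unfolding gm_def by simp

lemma gm_sum_y:
  assumes "i \<in> verts Q" "finite A" "\<forall>a\<in>A. v a \<in> VX i"
  shows "gm m i (sum v A) = (\<Sum>a\<in>A. gm m i (v a))"
  using add_sum[OF X.subspace_0[OF subX] subX_add, of i "gm m i"] gm_add_y assms by blast

lemma gm_act:
  assumes "\<phi> \<in> E" "i \<in> verts Q" "\<forall>b\<in>B i. m (i, b) \<in> VM i"
  shows "gm (\<lambda>j. if j \<in> JD then actD \<phi> j (m j) else 0) i y = \<phi> i (gm m i y)"
proof -
  have "gm (\<lambda>j. if j \<in> JD then actD \<phi> j (m j) else 0) i y
      = (\<Sum>b\<in>B i. scM (X.representation (B i) y b) (\<phi> i (m (i, b))))"
    unfolding gm_def using assms(2) by (intro sum.cong) (auto simp: JD_def actD_def)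
  also have "\<dots> = (\<Sum>b\<in>B i. \<phi> i (scM (X.representation (B i) y b) (m (i, b))))"
    using E_props(3)[OF assms(1,2)] assms(3) by simp
  also have "\<dots> = \<phi> i (gm m i y)"
    unfolding gm_def
    using add_sum[OF M.subspace_0[OF subM[OF assms(2)]] subM_add[OF assms(2)] E_props(2)[OF assms(1,2)], of "B i"]
      Bfin assms M.subspace_scale[OF subM[OF assms(2)]] by simp
  finally show ?thesis .
qed

end


context setting begin
lemma hom_of_Phi:
  assumes m: "m \<in> Prod JD SD" and z: "Phi m = 0"
  shows "is_hom Q scX VX fX scM VM fM (gm m)"
  unfolding is_hom_def
proof (intro conjI ballI allI)
  fix i x assume i: "i \<in> verts Q" and x: "x \<in> VX i"
  show "gm m i x \<in> VM i" using gm_in[OF i] PD[OF m i] by blast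
  fix y assume "y \<in> VX i"
  then show "gm m i (x + y) = gm m i x + gm m i y" using gm_add_y i x by blast
next
  fix i c x assume "i \<in> verts Q" "x \<in> VX i"
  then show "gm m i (scX c x) = scM c (gm m i x)" using gm_sc_y by blast
next
  fix \<alpha> x assume \<alpha>: "\<alpha> \<in> arrs Q" and x: "x \<in> VX (src Q \<alpha>)"
  let ?s = "src Q \<alpha>" and ?t = "tgt Q \<alpha>"
  let ?r = "X.representation (B ?s) x"
  have s: "?s \<in> verts Q" and t: "?t \<in> verts Q" using st \<alpha> by auto
  have xsp: "x \<in> X.span (B ?s)" using Bspan s x by blast
  have "(\<Sum>b\<in>B ?s. scX (?r b) b) = x"
    by (rule X.sum_representation_eq) (use Bind Bfin s xsp in auto)
  then have xs: "x = (\<Sum>b\<in>B ?s. scX (?r b) b)" by simp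
  have bin: "\<forall>b\<in>B ?s. scX (?r b) b \<in> VX ?s" using Bsub s X.subspace_scale[OF subX[OF s]] by auto
  have "fX \<alpha> x = (\<Sum>b\<in>B ?s. fX \<alpha> (scX (?r b) b))"
    by (subst xs, rule fX_sum[OF \<alpha>]) (use Bfin s bin in auto)
  also have "\<dots> = (\<Sum>b\<in>B ?s. scX (?r b) (fX \<alpha> b))"
  proof (rule sum.cong[OF refl])
    fix b assume "b \<in> B ?s"
    then have "b \<in> VX ?s" using Bsub s by blast
    then show "fX \<alpha> (scX (?r b) b) = scX (?r b) (fX \<alpha> b)" by (rule fX_sc[OF \<alpha>])
  qed
  finally have fx: "fX \<alpha> x = (\<Sum>b\<in>B ?s. scX (?r b) (fX \<alpha> b))" .
  have fb: "fX \<alpha> b \<in> VX ?t" if "b \<in> B ?s" for b using fX_in[OF \<alpha>] Bsub s that by auto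
  have "gm m ?t (fX \<alpha> x) = (\<Sum>b\<in>B ?s. gm m ?t (scX (?r b) (fX \<alpha> b)))"
    unfolding fx by (rule gm_sum_y[OF t]) (use Bfin s fb X.subspace_scale[OF subX[OF t]] in auto)
  also have "\<dots> = (\<Sum>b\<in>B ?s. scM (?r b) (gm m ?t (fX \<alpha> b)))" using gm_sc_y[OF t] fb by auto
  also have "\<dots> = (\<Sum>b\<in>B ?s. scM (?r b) (fM \<alpha> (m (?s, b))))"
  proof (intro sum.cong refl)
    fix b assume b: "b \<in> B ?s"
    have "Phi m (\<alpha>, b) = 0" using z by simp
    then show "scM (?r b) (gm m ?t (fX \<alpha> b)) = scM (?r b) (fM \<alpha> (m (?s, b)))"
      using \<alpha> b by (auto simp: Phi_def JC_def)
  qed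
  also have "\<dots> = (\<Sum>b\<in>B ?s. fM \<alpha> (scM (?r b) (m (?s, b))))" using fM_sc[OF \<alpha>] PD[OF m s] by auto
  also have "\<dots> = fM \<alpha> (gm m ?s x)"
    unfolding gm_def
    by (rule fM_sum[OF \<alpha>, symmetric]) (use Bfin s PD[OF m s] M.subspace_scale[OF subM[OF s]] in auto)
  finally show "gm m ?t (fX \<alpha> x) = fM \<alpha> (gm m ?s x)" .
qed

lemma Phi_zero_imp: "m \<in> Prod JD SD \<Longrightarrow> Phi m = 0 \<Longrightarrow> m = 0"
proof -
  assume m: "m \<in> Prod JD SD" and z: "Phi m = 0"
  have h: "is_hom Q scX VX fX scM VM fM (gm m)" using hom_of_Phi[OF m z] .
  then have "\<forall>i\<in>verts Q. \<forall>x\<in>VX i. gm m i x = 0" using nohom unfolding hom_nonzero_def by blast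
  show "m = 0"
  proof
    fix j
    show "m j = 0 j"
    proof (cases "j \<in> JD")
      case True
      then obtain i b where j: "j = (i, b)" "i \<in> verts Q" "b \<in> B i" by (auto simp: JD_def)
      have "b \<in> VX i" using Bsub j by blast
      then have "gm m i b = 0" using \<open>\<forall>i\<in>verts Q. \<forall>x\<in>VX i. gm m i x = 0\<close> j by blast
      then show ?thesis using gm_basis[of i b m] j by (simp add: zero_fun_def)
    next
      case False then show ?thesis using m by (simp add: ProdD(2) zero_fun_def)
    qed
  qed
qed

lemma Phi_in: "m \<in> Prod JD SD \<Longrightarrow> Phi m \<in> Prod JC SC"
proof -
  assume m: "m \<in> Prod JD SD"
  have "Phi m j \<in> SC j" if jC: "j \<in> JC" for j
  proof -
    obtain \<alpha> b where j: "j = (\<alpha>, b)" "\<alpha> \<in> arrs Q" "b \<in> B (src Q \<alpha>)" using jC by (auto simp: JC_def)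
    have s: "src Q \<alpha> \<in> verts Q" and t: "tgt Q \<alpha> \<in> verts Q" using st j by auto
    have "gm m (tgt Q \<alpha>) (fX \<alpha> b) \<in> VM (tgt Q \<alpha>)" using gm_in[OF t] PD[OF m t] by blast
    moreover have "fM \<alpha> (m (src Q \<alpha>, b)) \<in> VM (tgt Q \<alpha>)" using fM_in[OF j(2)] PD[OF m s] j by auto
    ultimately show ?thesis using j jC M.subspace_diff[OF subM[OF t]] by (auto simp: Phi_def SC_def)
  qed
  then show "Phi m \<in> Prod JC SC" by (auto simp: Prod_def Phi_def)
qed

lemma Phi_add: "p \<in> Prod JD SD \<Longrightarrow> q \<in> Prod JD SD \<Longrightarrow> Phi (p + q) = Phi p + Phi q"
proof
  fix j assume p: "p \<in> Prod JD SD" and q: "q \<in> Prod JD SD"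
  show "Phi (p + q) j = (Phi p + Phi q) j"
  proof (cases "j \<in> JC")
    case True
    then obtain \<alpha> b where j: "j = (\<alpha>, b)" "\<alpha> \<in> arrs Q" "b \<in> B (src Q \<alpha>)" by (auto simp: JC_def)
    have s: "src Q \<alpha> \<in> verts Q" using st j by auto
    have "fM \<alpha> (p (src Q \<alpha>, b) + q (src Q \<alpha>, b)) = fM \<alpha> (p (src Q \<alpha>, b)) + fM \<alpha> (q (src Q \<alpha>, b))"
      using fM_add[OF j(2)] PD[OF p s] PD[OF q s] j by auto
    then show ?thesis using True j by (simp add: Phi_def gm_add_m algebra_simps)
  qed (simp add: Phi_def)
qed

lemma Phi_diff: "p \<in> Prod JD SD \<Longrightarrow> q \<in> Prod JD SD \<Longrightarrow> Phi (p - q) = Phi p - Phi q"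
proof
  fix j assume p: "p \<in> Prod JD SD" and q: "q \<in> Prod JD SD"
  show "Phi (p - q) j = (Phi p - Phi q) j"
  proof (cases "j \<in> JC")
    case True
    then obtain \<alpha> b where j: "j = (\<alpha>, b)" "\<alpha> \<in> arrs Q" "b \<in> B (src Q \<alpha>)" by (auto simp: JC_def)
    have s: "src Q \<alpha> \<in> verts Q" using st j by auto
    have "fM \<alpha> (p (src Q \<alpha>, b) - q (src Q \<alpha>, b)) = fM \<alpha> (p (src Q \<alpha>, b)) - fM \<alpha> (q (src Q \<alpha>, b))"
      by (rule add_diff[OF fM_add[OF j(2)]]) (use PD[OF p s] PD[OF q s] j M.subspace_diff[OF subM[OF s]] in auto)
    then show ?thesis using True j by (simp add: Phi_def gm_diff_m algebra_simps)
  qed (simp add: Phi_def)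
qed

lemma Phi_0: "Phi 0 = 0"
proof
  fix j
  show "Phi 0 j = 0 j"
  proof (cases "j \<in> JC")
    case True
    then obtain \<alpha> b where j: "j = (\<alpha>, b)" "\<alpha> \<in> arrs Q" "b \<in> B (src Q \<alpha>)" by (auto simp: JC_def)
    have s: "src Q \<alpha> \<in> verts Q" using st j by auto
    have "fM \<alpha> 0 = 0" using add_diff[OF fM_add[OF j(2)], of 0 0] M.subspace_0[OF subM[OF s]] by simp
    then show ?thesis using True j by (simp add: Phi_def gm_zero_m)
  qed (simp add: Phi_def)
qed

lemma Phi_act:
  assumes "\<phi> \<in> E" "m \<in> Prod JD SD"
  shows "Phi (\<lambda>j. if j \<in> JD then actD \<phi> j (m j) else 0) = (\<lambda>j. if j \<in> JC then actC \<phi> j (Phi m j) else 0)"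
proof
  fix j
  show "Phi (\<lambda>j. if j \<in> JD then actD \<phi> j (m j) else 0) j = (if j \<in> JC then actC \<phi> j (Phi m j) else 0)"
  proof (cases "j \<in> JC")
    case True
    then obtain \<alpha> b where j: "j = (\<alpha>, b)" "\<alpha> \<in> arrs Q" "b \<in> B (src Q \<alpha>)" by (auto simp: JC_def)
    let ?s = "src Q \<alpha>" and ?t = "tgt Q \<alpha>"
    have s: "?s \<in> verts Q" and t: "?t \<in> verts Q" using st j by auto
    have g: "gm (\<lambda>j. if j \<in> JD then actD \<phi> j (m j) else 0) ?t (fX \<alpha> b) = \<phi> ?t (gm m ?t (fX \<alpha> b))"
      using gm_act[OF assms(1) t] PD[OF assms(2) t] by blast
    have sb: "(?s, b) \<in> JD" using s j by (auto simp: JD_def)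
    have f: "fM \<alpha> (\<phi> ?s (m (?s, b))) = \<phi> ?t (fM \<alpha> (m (?s, b)))"
      using E_arr[OF assms(1) j(2)] PD[OF assms(2) s] j by auto
    have i1: "gm m ?t (fX \<alpha> b) \<in> VM ?t" using gm_in[OF t] PD[OF assms(2) t] by blast
    have i2: "fM \<alpha> (m (?s, b)) \<in> VM ?t" using fM_in[OF j(2)] PD[OF assms(2) s] j by auto
    have "\<phi> ?t (gm m ?t (fX \<alpha> b) - fM \<alpha> (m (?s, b))) = \<phi> ?t (gm m ?t (fX \<alpha> b)) - \<phi> ?t (fM \<alpha> (m (?s, b)))"
      by (rule add_diff[OF E_props(2)[OF assms(1) t]]) (use i1 i2 M.subspace_diff[OF subM[OF t]] in auto)
    then show ?thesis using True j g sb f by (simp add: Phi_def actD_def actC_def)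
  qed (simp add: Phi_def)
qed

lemma Phi_inj: "inj_on Phi (Prod JD SD)"
proof (rule inj_onI)
  fix p q assume p: "p \<in> Prod JD SD" and q: "q \<in> Prod JD SD" and e: "Phi p = Phi q"
  have "p - q \<in> Prod JD SD" using p q M.subspace_diff[OF subM] by (auto simp: Prod_def SD_def JD_def)
  moreover have "Phi (p - q) = 0" using Phi_diff[OF p q] e by simp
  ultimately have "p - q = 0" using Phi_zero_imp by blast
  then show "p = q" by simp
qed

lemma Phi_Sub: "N \<in> Sub JD SD E actD \<Longrightarrow> Phi ` N \<in> Sub JC SC E actC"
proof -
  assume N: "N \<in> Sub JD SD E actD"
  note NP = SubD(1)[OF N]
  show "Phi ` N \<in> Sub JC SC E actC"
  proof (rule SubI)
    show "Phi ` N \<subseteq> Prod JC SC" using Phi_in NP by blast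
    show "0 \<in> Phi ` N" using SubD(2)[OF N] Phi_0 by (intro image_eqI[where x=0]) simp_all
    show "p + q \<in> Phi ` N" if pq: "p \<in> Phi ` N" "q \<in> Phi ` N" for p q
    proof -
      obtain p' where p': "p = Phi p'" "p' \<in> N" using pq(1) by (rule imageE)
      obtain q' where q': "q = Phi q'" "q' \<in> N" using pq(2) by (rule imageE)
      have "p' \<in> Prod JD SD" "q' \<in> Prod JD SD" using p' q' NP by blast+
      then have "p + q = Phi (p' + q')" using Phi_add p' q' by simp
      moreover have "p' + q' \<in> N" by (rule SubD(3)[OF N p'(2) q'(2)])
      ultimately show ?thesis by (rule image_eqI)
    qed
    show "(\<lambda>j. if j \<in> JC then actC e j (p j) else 0) \<in> Phi ` N" if e: "e \<in> E" and p: "p \<in> Phi ` N" for e p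
    proof -
      obtain p' where p': "p = Phi p'" "p' \<in> N" using p by (rule imageE)
      have pP: "p' \<in> Prod JD SD" using p' NP by blast
      have "(\<lambda>j. if j \<in> JD then actD e j (p' j) else 0) \<in> N" by (rule SubD(4)[OF N e p'(2)])
      moreover have "(\<lambda>j. if j \<in> JC then actC e j (p j) else 0) = Phi (\<lambda>j. if j \<in> JD then actD e j (p' j) else 0)"
        by (simp only: p'(1) Phi_act[OF e pP])
      ultimately show ?thesis by (rule image_eqI[where f=Phi, rotated])
    qed
  qed
qed

lemma Phi_strict: "N \<in> Sub JD SD E actD \<Longrightarrow> N' \<in> Sub JD SD E actD \<Longrightarrow> N \<subset> N' \<Longrightarrow> Phi ` N \<subset> Phi ` N'"
proof -
  assume N: "N \<in> Sub JD SD E actD" "N' \<in> Sub JD SD E actD" "N \<subset> N'"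
  have inj: "inj_on Phi N'" using Phi_inj SubD(1)[OF N(2)] by (rule inj_on_subset)
  obtain x where x: "x \<in> N' - N" using psubset_imp_ex_mem[OF N(3)] by (elim exE)
  have sub: "Phi ` N \<subseteq> Phi ` N'" using psubset_imp_subset[OF N(3)] by (rule image_mono)
  have "Phi x \<notin> Phi ` N"
  proof
    assume "Phi x \<in> Phi ` N"
    then obtain y where y: "Phi x = Phi y" "y \<in> N" by (rule imageE)
    have "y \<in> N'" using y(2) psubset_imp_subset[OF N(3)] by blast
    then have "x = y" using inj y(1) x by (simp add: inj_on_def)
    then show False using x y(2) by simp
  qed
  moreover have "Phi x \<in> Phi ` N'" using x by simp
  ultimately show "Phi ` N \<subset> Phi ` N'" using sub by blast
qed

end



lemma End_rep_0:
  assumes "is_rep Q sc V f" "\<phi> \<in> End_rep Q sc V f" "k \<in> verts Q"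
  shows "\<phi> k 0 = 0"
proof -
  interpret M: vector_space sc using assms(1) by (simp add: is_rep_def)
  have z: "0 \<in> V k" using assms(1,3) M.subspace_0 by (auto simp: is_rep_def)
  have add: "\<forall>x\<in>V k. \<forall>y\<in>V k. \<phi> k (x + y) = \<phi> k x + \<phi> k y"
    using assms(2,3) by (auto simp: End_rep_def is_hom_def)
  have "\<phi> k (0 + 0) = \<phi> k 0 + \<phi> k 0" using add z by blast
  then show ?thesis by simp
qed

lemma End_rep_in:
  assumes "\<phi> \<in> End_rep Q sc V f" "k \<in> verts Q" "x \<in> V k"
  shows "\<phi> k x \<in> V k"
  using assms by (auto simp: End_rep_def is_hom_def)

lemma E_submodsI:
  assumes "N \<subseteq> total_space Q V" "(\<lambda>_. 0) \<in> N" "\<And>m n. m \<in> N \<Longrightarrow> n \<in> N \<Longrightarrow> (\<lambda>i. m i + n i) \<in> N"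
    "\<And>\<phi> m. \<phi> \<in> End_rep Q sc V f \<Longrightarrow> m \<in> N \<Longrightarrow> (\<lambda>i. if i \<in> verts Q then \<phi> i (m i) else 0) \<in> N"
  shows "N \<in> E_submods Q sc V f"
  using assms unfolding E_submods_def by blast

lemma E_submods_at_finite:
  assumes rep: "is_rep Q sc V f" and ef: "endo_finite Q sc V f" and i: "i \<in> verts Q"
  shows "finite_length (E_submods_at Q sc V f i)"
proof -
  interpret M: vector_space sc using rep by (simp add: is_rep_def)
  have subV: "\<And>k. k \<in> verts Q \<Longrightarrow> M.subspace (V k)" using rep by (simp add: is_rep_def)
  have z: "\<And>k. k \<in> verts Q \<Longrightarrow> 0 \<in> V k" using subV M.subspace_0 by blast
  obtain n where n: "\<forall>cs. strict_chain (E_submods Q sc V f) cs \<longrightarrow> length cs \<le> Suc n"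
    using ef unfolding endo_finite_def finite_length_def by blast
  have b: "bnd (E_submods Q sc V f) n" unfolding bnd_def using n .
  let ?h = "\<lambda>N. {m \<in> total_space Q V. m i \<in> N \<and> (\<forall>k. k \<noteq> i \<longrightarrow> m k = 0)}"
  have "bnd (E_submods_at Q sc V f i) n"
  proof (rule bnd_map[OF b])
    fix N assume N: "N \<in> E_submods_at Q sc V f i"
    have N0: "0 \<in> N" and Nadd: "\<And>a b. a \<in> N \<Longrightarrow> b \<in> N \<Longrightarrow> a + b \<in> N"
      and Nphi: "\<And>\<phi> a. \<phi> \<in> End_rep Q sc V f \<Longrightarrow> a \<in> N \<Longrightarrow> \<phi> i a \<in> N"
      using N unfolding E_submods_at_def by blast+
    have t0: "(\<lambda>_. 0) \<in> total_space Q V" using z by (auto simp: total_space_def)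
    show "?h N \<in> E_submods Q sc V f"
    proof (rule E_submodsI)
      show "?h N \<subseteq> total_space Q V" by blast
      show "(\<lambda>_. 0) \<in> ?h N" using t0 N0 by simp
      show "(\<lambda>k. m k + n k) \<in> ?h N" if m: "m \<in> ?h N" and nn: "n \<in> ?h N" for m n
      proof -
        have "(\<lambda>k. m k + n k) \<in> total_space Q V"
          using m nn M.subspace_add[OF subV] unfolding total_space_def by auto
        then show ?thesis using m nn Nadd by simp
      qed
      show "(\<lambda>k. if k \<in> verts Q then \<phi> k (m k) else 0) \<in> ?h N" if \<phi>: "\<phi> \<in> End_rep Q sc V f" and m: "m \<in> ?h N" for \<phi> m
      proof -
        have "(\<lambda>k. if k \<in> verts Q then \<phi> k (m k) else 0) \<in> total_space Q V"
          using m End_rep_in[OF \<phi>] by (auto simp: total_space_def)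
        moreover have "\<phi> i (m i) \<in> N" using m Nphi[OF \<phi>] by simp
        moreover have "\<forall>k. k \<noteq> i \<longrightarrow> (if k \<in> verts Q then \<phi> k (m k) else 0) = 0"
          using m End_rep_0[OF rep \<phi>] by auto
        ultimately show ?thesis using i by simp
      qed
    qed
  next
    fix N N' assume N: "N \<in> E_submods_at Q sc V f i" "N' \<in> E_submods_at Q sc V f i" "N \<subset> N'"
    obtain x where x: "x \<in> N' - N" using psubset_imp_ex_mem[OF N(3)] by (elim exE)
    have xV: "x \<in> V i" using x N(2) unfolding E_submods_at_def by blast
    let ?m = "\<lambda>k. if k = i then x else 0"
    have "?m \<in> total_space Q V" using xV z i unfolding total_space_def by auto
    then have in1: "?m \<in> ?h N'" and in2: "?m \<notin> ?h N" using x by simp_all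
    have sub: "?h N \<subseteq> ?h N'" using psubset_imp_subset[OF N(3)] by blast
    show "?h N \<subset> ?h N'"
    proof (rule psubsetI[OF sub])
      show "?h N \<noteq> ?h N'" using in1 in2 by metis
    qed
  qed
  then show ?thesis unfolding finite_length_def bnd_def by blast
qed




lemma subrepsI:
  assumes "\<And>k. k \<in> verts Q \<Longrightarrow> U k \<subseteq> V k" "\<And>k. k \<in> verts Q \<Longrightarrow> Modules.module.subspace sc (U k)"
    "\<And>\<alpha> x. \<alpha> \<in> arrs Q \<Longrightarrow> x \<in> U (src Q \<alpha>) \<Longrightarrow> f \<alpha> x \<in> U (tgt Q \<alpha>)"
  shows "Sigma (verts Q) U \<in> subreps Q sc V f"
  unfolding subreps_def using assms by blast

lemma finite_indep:
  assumes fq: "finite_quiver Q" and ac: "acyclic_quiver Q" and rep: "is_rep Q sc V f"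
    and fl: "finite_length_rep Q sc V f" and i: "i \<in> verts Q" and Bs: "B \<subseteq> V i"
    and ind: "\<not> Modules.module.dependent sc B"
  shows "finite B"
proof (rule ccontr)
  assume inf: "infinite B"
  interpret X: vector_space sc using rep by (simp add: is_rep_def)
  have subV: "\<And>k. k \<in> verts Q \<Longrightarrow> X.subspace (V k)" using rep by (simp add: is_rep_def)
  have fin: "\<And>\<alpha> x. \<alpha> \<in> arrs Q \<Longrightarrow> x \<in> V (src Q \<alpha>) \<Longrightarrow> f \<alpha> x \<in> V (tgt Q \<alpha>)"
    using rep by (simp add: is_rep_def)
  have fadd: "\<And>\<alpha> x y. \<alpha> \<in> arrs Q \<Longrightarrow> x \<in> V (src Q \<alpha>) \<Longrightarrow> y \<in> V (src Q \<alpha>) \<Longrightarrow> f \<alpha> (x + y) = f \<alpha> x + f \<alpha> y"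
    using rep by (simp add: is_rep_def)
  have st: "\<And>\<alpha>. \<alpha> \<in> arrs Q \<Longrightarrow> src Q \<alpha> \<in> verts Q" "\<And>\<alpha>. \<alpha> \<in> arrs Q \<Longrightarrow> tgt Q \<alpha> \<in> verts Q"
    using fq by (auto simp: finite_quiver_def)
  have f0: "f \<alpha> 0 = 0" if "\<alpha> \<in> arrs Q" for \<alpha>
  proof -
    have "0 \<in> V (src Q \<alpha>)" using X.subspace_0[OF subV[OF st(1)[OF that]]] .
    then have "f \<alpha> (0 + 0) = f \<alpha> 0 + f \<alpha> 0" using fadd[OF that] by blast
    then show ?thesis by simp
  qed
  have arr: "(src Q \<alpha>, tgt Q \<alpha>) \<in> arrow_rel Q" if "\<alpha> \<in> arrs Q" for \<alpha>
    using that unfolding arrow_rel_def by blast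
  define R where "R = {k. (k, i) \<in> (arrow_rel Q)\<^sup>+}"
  have iR: "i \<notin> R" using ac unfolding R_def acyclic_quiver_def by blast
  define U where "U W k = (if k = i then W else if k \<in> R then {0} else V k)" for W k
  define Sig where "Sig W = Sigma (verts Q) (U W)" for W
  have Sig_in: "Sig W \<in> subreps Q sc V f" if W: "W \<subseteq> V i" "X.subspace W" for W
    unfolding Sig_def
  proof (rule subrepsI)
    fix k assume k: "k \<in> verts Q"
    show "U W k \<subseteq> V k" using W X.subspace_0[OF subV[OF k]] by (auto simp: U_def)
    show "X.subspace (U W k)" using W subV[OF k] X.span_empty X.subspace_span[of "{}"]
      by (simp add: U_def)
  next
    fix \<alpha> x assume \<alpha>: "\<alpha> \<in> arrs Q" and x: "x \<in> U W (src Q \<alpha>)"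
    let ?s = "src Q \<alpha>" and ?t = "tgt Q \<alpha>"
    have st_rel: "(?s, ?t) \<in> arrow_rel Q" using arr[OF \<alpha>] .
    have zt: "0 \<in> U W ?t" using W X.subspace_0[OF subV[OF st(2)[OF \<alpha>]]] X.subspace_0[OF W(2)] by (auto simp: U_def)
    show "f \<alpha> x \<in> U W ?t"
    proof (cases "?s = i")
      case True
      then have xV: "x \<in> V ?s" using x W by (simp add: U_def) blast
      have "?t \<noteq> i"
      proof
        assume "?t = i" then have "(i, i) \<in> (arrow_rel Q)\<^sup>+" using st_rel True by auto
        then show False using ac unfolding acyclic_quiver_def by blast
      qed
      moreover have "?t \<notin> R"
      proof
        assume "?t \<in> R" then have "(?t, i) \<in> (arrow_rel Q)\<^sup>+" unfolding R_def by simp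
        then have "(i, i) \<in> (arrow_rel Q)\<^sup>+" using st_rel True by (metis trancl_into_trancl2)
        then show False using ac unfolding acyclic_quiver_def by blast
      qed
      ultimately show ?thesis using fin[OF \<alpha> xV] by (simp add: U_def)
    next
      case sF: False
      show ?thesis
      proof (cases "?s \<in> R")
        case True
        then have "x = 0" using x sF by (simp add: U_def)
        then show ?thesis using f0[OF \<alpha>] zt by simp
      next
        case False
        then have xV: "x \<in> V ?s" using x sF by (simp add: U_def)
        have "?t \<noteq> i"
        proof
          assume "?t = i" then have "?s \<in> R" using st_rel unfolding R_def by auto
          then show False using False by simp
        qed
        moreover have "?t \<notin> R"
        proof
          assume "?t \<in> R" then have "(?t, i) \<in> (arrow_rel Q)\<^sup>+" unfolding R_def by simp
          then have "(?s, i) \<in> (arrow_rel Q)\<^sup>+" using st_rel by (metis trancl_into_trancl2)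
          then show False using False unfolding R_def by simp
        qed
        ultimately show ?thesis using fin[OF \<alpha> xV] by (simp add: U_def)
      qed
    qed
  qed
  have Sig_strict: "Sig W \<subset> Sig W'" if Wps: "W \<subset> W'" for W W'
  proof -
    have WW: "W \<subseteq> W'" using psubset_imp_subset[OF Wps] .
    have "U W k \<subseteq> U W' k" for k using WW by (simp add: U_def)
    then have sub: "Sig W \<subseteq> Sig W'" unfolding Sig_def by (intro Sigma_mono) auto
    obtain w where w: "w \<in> W' - W" using psubset_imp_ex_mem[OF Wps] by (elim exE)
    have in1: "(i, w) \<in> Sig W'" using w i unfolding Sig_def U_def by simp
    have in2: "(i, w) \<notin> Sig W" using w unfolding Sig_def U_def by simp
    show ?thesis
    proof (rule psubsetI[OF sub])
      show "Sig W \<noteq> Sig W'" using in1 in2 by metis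
    qed
  qed
  obtain n where n: "\<forall>cs. strict_chain (subreps Q sc V f) cs \<longrightarrow> length cs \<le> Suc n"
    using fl unfolding finite_length_rep_def finite_length_def by blast
  obtain F where F: "F \<subseteq> B" "finite F" "card F = Suc n" using infinite_arbitrarily_large[OF inf] by blast
  obtain xs where xs: "set xs = F" "distinct xs" using finite_distinct_list[OF F(2)] by blast
  have lxs: "length xs = Suc n" using distinct_card[OF xs(2)] xs(1) F(3) by simp
  define cs where "cs = map (\<lambda>k. Sig (X.span (set (take k xs)))) [0..<Suc (Suc n)]"
  have spV: "X.span (set (take k xs)) \<subseteq> V i" for k
  proof (rule X.span_minimal[OF _ subV[OF i]])
    show "set (take k xs) \<subseteq> V i" using set_take_subset[of k xs] xs(1) F(1) Bs by blast
  qed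
  have sp_strict: "X.span (set (take a xs)) \<subset> X.span (set (take b xs))" if ab: "a < b" "b \<le> Suc n" for a b
  proof -
    have sub: "X.span (set (take a xs)) \<subseteq> X.span (set (take b xs))"
      using X.span_mono[OF set_take_subset_set_take[of a b xs]] ab by simp
    have al: "a < length xs" using ab lxs by simp
    let ?P = "set (take b xs)"
    have in1: "xs ! a \<in> ?P"
    proof -
      have "take b xs ! a = xs ! a" using ab by simp
      moreover have "a < length (take b xs)" using ab al by simp
      ultimately show ?thesis by (metis nth_mem)
    qed
    have PB: "?P \<subseteq> B" using set_take_subset[of b xs] xs(1) F(1) by blast
    have indP: "\<not> X.dependent ?P"
    proof
      assume "X.dependent ?P"
      then have "X.dependent B" using PB by (rule X.dependent_mono)
      then show False using ind by simp
    qed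
    have sa: "set (take a xs) \<subseteq> ?P - {xs ! a}"
    proof
      fix y assume "y \<in> set (take a xs)"
      then obtain c where c: "c < length (take a xs)" "y = take a xs ! c" by (metis in_set_conv_nth)
      then have c2: "c < a" "y = xs ! c" by simp_all
      have "xs ! c \<noteq> xs ! a" using nth_eq_iff_index_eq[OF xs(2)] c2(1) al by simp
      moreover have "y \<in> ?P" using \<open>y \<in> set (take a xs)\<close> set_take_subset_set_take[of a b xs] ab by auto
      ultimately show "y \<in> ?P - {xs ! a}" using c2 by simp
    qed
    have "xs ! a \<notin> X.span (set (take a xs))"
    proof
      assume "xs ! a \<in> X.span (set (take a xs))"
      then have "xs ! a \<in> X.span (?P - {xs ! a})" using X.span_mono[OF sa] by blast
      then have "X.dependent ?P" unfolding X.dependent_def by (rule bexI[OF _ in1])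
      then show False using indP by simp
    qed
    moreover have "xs ! a \<in> X.span (set (take b xs))" using in1 X.span_base by blast
    ultimately have ne: "X.span (set (take a xs)) \<noteq> X.span (set (take b xs))" by metis
    show ?thesis by (rule psubsetI[OF sub ne])
  qed
  have "strict_chain (subreps Q sc V f) cs"
    unfolding strict_chain_def
  proof (intro conjI)
    show "cs \<noteq> []" unfolding cs_def by simp
    show "set cs \<subseteq> subreps Q sc V f"
    proof
      fix S assume "S \<in> set cs"
      then obtain k where "S = Sig (X.span (set (take k xs)))" unfolding cs_def by auto
      then show "S \<in> subreps Q sc V f" using Sig_in[OF spV X.subspace_span] by simp
    qed
    show "sorted_wrt (\<subset>) cs"
      unfolding sorted_wrt_iff_nth_less
    proof (intro allI impI)
      fix a b assume ab: "a < b" "b < length cs"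
      then have bn: "b \<le> Suc n" unfolding cs_def by simp
      have "Sig (X.span (set (take a xs))) \<subset> Sig (X.span (set (take b xs)))"
        by (rule Sig_strict[OF sp_strict[OF ab(1) bn]])
      moreover have "cs ! a = Sig (X.span (set (take a xs)))" "cs ! b = Sig (X.span (set (take b xs)))"
        using ab unfolding cs_def by (simp_all del: upt_Suc)
      ultimately show "cs ! a \<subset> cs ! b" by simp
    qed
  qed
  then have "length cs \<le> Suc n" using n by blast
  then show False unfolding cs_def by simp
qed




theorem lemma8:
  fixes Q :: "('a, 'b) quiver"
    and scX :: "'k::field \<Rightarrow> 'x::ab_group_add \<Rightarrow> 'x" and VX :: "'a \<Rightarrow> 'x set" and fX :: "'b \<Rightarrow> 'x \<Rightarrow> 'x"
    and scM :: "'k \<Rightarrow> 'm::ab_group_add \<Rightarrow> 'm" and VM :: "'a \<Rightarrow> 'm set" and fM :: "'b \<Rightarrow> 'm \<Rightarrow> 'm"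
  assumes "finite_quiver Q" and "connected_quiver Q" and "acyclic_quiver Q"
    and "is_rep Q scX VX fX" and "finite_length_rep Q scX VX fX"
    and "is_rep Q scM VM fM" and "endo_finite Q scM VM fM"
    and "euler_form Q (dimv Q scX VX) (Dimv Q scM VM fM) > 0"
  shows "hom_nonzero Q scX VX fX scM VM fM"
proof (rule ccontr)
  assume nh: "\<not> hom_nonzero Q scX VX fX scM VM fM"
  note fq = assms(1) and ac = assms(3) and repX = assms(4) and fl = assms(5)
    and repM = assms(6) and ef = assms(7) and eul = assms(8)
  interpret X: vector_space scX using repX by (simp add: is_rep_def)
  interpret M: vector_space scM using repM by (simp add: is_rep_def)
  have "\<forall>i\<in>verts Q. \<exists>Bi. Bi \<subseteq> VX i \<and> X.independent Bi \<and> VX i \<subseteq> X.span Bi \<and> card Bi = X.dim (VX i)"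
  proof
    fix i
    obtain Bi where "Bi \<subseteq> VX i" "X.independent Bi" "VX i \<subseteq> X.span Bi" "card Bi = X.dim (VX i)"
      by (rule X.basis_exists)
    then show "\<exists>Bi. Bi \<subseteq> VX i \<and> X.independent Bi \<and> VX i \<subseteq> X.span Bi \<and> card Bi = X.dim (VX i)" by blast
  qed
  then obtain B where B: "\<forall>i\<in>verts Q. B i \<subseteq> VX i \<and> X.independent (B i) \<and> VX i \<subseteq> X.span (B i) \<and> card (B i) = X.dim (VX i)"
    by (metis (no_types, lifting) bchoice)
  have Bsub: "\<forall>i\<in>verts Q. B i \<subseteq> VX i" and Bind: "\<forall>i\<in>verts Q. X.independent (B i)"
    and Bspan: "\<forall>i\<in>verts Q. VX i \<subseteq> X.span (B i)" and Bcard: "\<forall>i\<in>verts Q. card (B i) = X.dim (VX i)"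
    using B by blast+
  have Bfin: "\<forall>i\<in>verts Q. finite (B i)"
  proof
    fix i assume i: "i \<in> verts Q"
    show "finite (B i)" by (rule finite_indep[OF fq ac repX fl i]) (use Bsub Bind i in auto)
  qed
  interpret S: setting scX scM Q VX fX VM fM B
    by unfold_locales (use fq repX repM Bfin Bsub Bind Bspan nh in auto)
  define d where "d i = mod_length (E_submods_at Q scM VM fM i)" for i
  have bd: "bnd (E_submods_at Q scM VM fM i) (d i)" "ach (E_submods_at Q scM VM fM i) (d i)"
    if i: "i \<in> verts Q" for i
  proof -
    have fli: "finite_length (E_submods_at Q scM VM fM i)" by (rule E_submods_at_finite[OF repM ef i])
    have z: "\<And>\<phi>. \<phi> \<in> End_rep Q scM VM fM \<Longrightarrow> \<phi> i 0 = 0" using End_rep_0[OF repM _ i] by blast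
    have "0 \<in> VM i" using M.subspace_0 repM i by (simp add: is_rep_def)
    then have "{0} \<in> E_submods_at Q scM VM fM i" using z unfolding E_submods_at_def by simp
    then show "bnd (E_submods_at Q scM VM fM i) (d i)" "ach (E_submods_at Q scM VM fM i) (d i)"
      unfolding d_def using mod_length_props[OF fli] by blast+
  qed
  have eqD: "Subat (S.SD j) S.E (\<lambda>e. S.actD e j) = E_submods_at Q scM VM fM (fst j)" for j
    unfolding Subat_def E_submods_at_def S.SD_def S.actD_def S.E_def by simp
  have eqC: "Subat (S.SC j) S.E (\<lambda>e. S.actC e j) = E_submods_at Q scM VM fM (tgt Q (fst j))" for j
    unfolding Subat_def E_submods_at_def S.SC_def S.actC_def S.E_def by simp
  have vfin: "finite (verts Q)" "finite (arrs Q)" using fq by (simp_all add: finite_quiver_def)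
  have finD: "finite S.JD" unfolding S.JD_def using vfin Bfin by (intro finite_SigmaI) auto
  have finC: "finite S.JC" unfolding S.JC_def using vfin Bfin S.st by (intro finite_SigmaI) auto
  have achD: "ach (Sub S.JD S.SD S.E S.actD) (\<Sum>j\<in>S.JD. d (fst j))"
  proof (rule Sub_lower[OF finD])
    show "\<forall>j\<in>S.JD. ach (Subat (S.SD j) S.E (\<lambda>e. S.actD e j)) (d (fst j))"
      unfolding eqD using bd(2) by (auto simp: S.JD_def)
  qed
  have bndC: "bnd (Sub S.JC S.SC S.E S.actC) (\<Sum>j\<in>S.JC. d (tgt Q (fst j)))"
  proof (rule Sub_upper[OF finC])
    show "\<forall>j\<in>S.JC. bnd (Subat (S.SC j) S.E (\<lambda>e. S.actC e j)) (d (tgt Q (fst j)))"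
      unfolding eqC using bd(1) S.st by (auto simp: S.JC_def)
    show "\<exists>e\<in>S.E. \<forall>j\<in>S.JC. \<forall>x\<in>S.SC j. S.actC e j x = - x"
      by (rule bexI[OF _ S.neg_E]) (simp add: S.actC_def)
    show "\<forall>e\<in>S.E. \<forall>j\<in>S.JC. S.actC e j 0 = 0"
    proof (intro ballI)
      fix e j assume e: "e \<in> S.E" and j: "j \<in> S.JC"
      have "tgt Q (fst j) \<in> verts Q" using j S.st by (auto simp: S.JC_def)
      then show "S.actC e j 0 = 0" unfolding S.actC_def using S.E_props(4)[OF e] by blast
    qed
  qed
  have achC: "ach (Sub S.JC S.SC S.E S.actC) (\<Sum>j\<in>S.JD. d (fst j))"
    by (rule ach_map[OF achD S.Phi_Sub S.Phi_strict])
  have le: "(\<Sum>j\<in>S.JD. d (fst j)) \<le> (\<Sum>j\<in>S.JC. d (tgt Q (fst j)))"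
    by (rule ach_bnd[OF achC bndC])
  have sD: "(\<Sum>j\<in>S.JD. d (fst j)) = (\<Sum>i\<in>verts Q. card (B i) * d i)"
  proof -
    have "(\<Sum>i\<in>verts Q. card (B i) * d i) = (\<Sum>i\<in>verts Q. \<Sum>b\<in>B i. d i)" by simp
    also have "\<dots> = (\<Sum>(i, b)\<in>Sigma (verts Q) B. d i)" by (rule sum.Sigma) (use vfin Bfin in auto)
    also have "\<dots> = (\<Sum>j\<in>S.JD. d (fst j))" unfolding S.JD_def by (simp add: case_prod_beta)
    finally show ?thesis by simp
  qed
  have sC: "(\<Sum>j\<in>S.JC. d (tgt Q (fst j))) = (\<Sum>\<alpha>\<in>arrs Q. card (B (src Q \<alpha>)) * d (tgt Q \<alpha>))"
  proof -
    have "(\<Sum>\<alpha>\<in>arrs Q. card (B (src Q \<alpha>)) * d (tgt Q \<alpha>)) = (\<Sum>\<alpha>\<in>arrs Q. \<Sum>b\<in>B (src Q \<alpha>). d (tgt Q \<alpha>))" by simp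
    also have "\<dots> = (\<Sum>(\<alpha>, b)\<in>Sigma (arrs Q) (\<lambda>\<alpha>. B (src Q \<alpha>)). d (tgt Q \<alpha>))"
      by (rule sum.Sigma) (use vfin Bfin S.st in auto)
    also have "\<dots> = (\<Sum>j\<in>S.JC. d (tgt Q (fst j)))" unfolding S.JC_def by (simp add: case_prod_beta)
    finally show ?thesis by simp
  qed
  have dimv_eq: "dimv Q scX VX i = int (card (B i))" if "i \<in> verts Q" for i
    using Bcard that unfolding dimv_def by simp
  have Dimv_eq: "Dimv Q scM VM fM i = int (d i)" for i
    unfolding Dimv_def d_def by simp
  have "euler_form Q (dimv Q scX VX) (Dimv Q scM VM fM)
      = (\<Sum>i\<in>verts Q. int (card (B i)) * int (d i)) - (\<Sum>\<alpha>\<in>arrs Q. int (card (B (src Q \<alpha>))) * int (d (tgt Q \<alpha>)))"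
    unfolding euler_form_def Dimv_eq using dimv_eq S.st by simp
  also have "\<dots> = int (\<Sum>i\<in>verts Q. card (B i) * d i) - int (\<Sum>\<alpha>\<in>arrs Q. card (B (src Q \<alpha>)) * d (tgt Q \<alpha>))"
    by simp
  also have "\<dots> \<le> 0"
  proof -
    have le2: "(\<Sum>i\<in>verts Q. card (B i) * d i) \<le> (\<Sum>\<alpha>\<in>arrs Q. card (B (src Q \<alpha>)) * d (tgt Q \<alpha>))"
      using le sD sC by simp
    have "int (\<Sum>i\<in>verts Q. card (B i) * d i) \<le> int (\<Sum>\<alpha>\<in>arrs Q. card (B (src Q \<alpha>)) * d (tgt Q \<alpha>))"
      using le2 by (simp only: of_nat_le_iff)
    then show ?thesis by linarith
  qed
  finally show False using eul by simp
qed


end
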